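(* Let $m_\infty(0,0)=(\mu_{ij})_{0\le i,j<\infty}$ be a semi-infinite complex matrix, let $\Lambda$ be the semi-infinite shift matrix $\Lambda_{ij}=\delta_{j-i,1}$, and set $m_\infty(t,s)=e^{\sum_{i\ge1}t_i\Lambda^i}\,m_\infty(0,0)\,e^{-\sum_{i\ge1}s_i\Lambda^{\top i}}$ and $\tau_n(t,s)=\det m_n(t,s)$, where $m_n(t,s)$ is the upper-left $n\times n$ block of $m_\infty(t,s)$. Then for $n>0$, $$\tau_n(t,s)=\sum_{\lambda,\nu}\det\big(m^{\lambda,\nu}\big)\,s_\lambda(t)\,s_\nu(-s),\qquad m^{\lambda,\nu}=\big(\mu_{\lambda_i-i+n,\;\nu_j-j+n}\big)_{1\le i,j\le n},$$ the sum being over all Young diagrams $\lambda,\nu$ with at most $n$ rows.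
   Context: Schur polynomials: $e^{\sum_{i\ge1}t_iz^i}=\sum_{k\ge0}p_k(t)z^k$, $p_k=0$ for $k<0$; for a Young diagram $\lambda_1\ge\dots\ge\lambda_n\ge0$, $s_\lambda(t)=\det(p_{\lambda_i-i+j}(t))_{1\le i,j\le n}$. Everything is understood as formal power series in $t=(t_1,t_2,\dots)$, $s=(s_1,s_2,\dots)$. *)

theory Defs
  imports "HOL-Analysis.Analysis" "HOL-Library.Poly_Mapping"
    "HOL-Combinatorics.Permutations" "Jordan_Normal_Form.Determinant"
begin

type_synonym 'v mon = "'v \<Rightarrow>\<^sub>0 nat"
type_synonym 'v ser = "'v mon \<Rightarrow> complex"

definition ser_const :: "complex \<Rightarrow> 'v ser" where
  "ser_const c = (\<lambda>m. if m = 0 then c else 0)"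

definition ser_zero :: "'v ser" where "ser_zero = ser_const 0"
definition ser_one :: "'v ser" where "ser_one = ser_const 1"

definition ser_var :: "'v \<Rightarrow> 'v ser" where
  "ser_var v = (\<lambda>m. if m = Poly_Mapping.single v 1 then 1 else 0)"

definition ser_neg :: "'v ser \<Rightarrow> 'v ser" where
  "ser_neg f = (\<lambda>m. - f m)"

definition ser_scale :: "complex \<Rightarrow> 'v ser \<Rightarrow> 'v ser" where
  "ser_scale c f = (\<lambda>m. c * f m)"

definition ser_mult :: "'v ser \<Rightarrow> 'v ser \<Rightarrow> 'v ser" where
  "ser_mult f g = (\<lambda>m. \<Sum>(a, b) \<in> {(a, b). a + b = m}. f a * g b)"

definition ser_pow :: "'v ser \<Rightarrow> nat \<Rightarrow> 'v ser" where
  "ser_pow f k = (ser_mult f ^^ k) ser_one"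

definition ser_prod_list :: "'v ser list \<Rightarrow> 'v ser" where
  "ser_prod_list fs = foldr ser_mult fs ser_one"

text \<open>Sum of a (possibly infinite) family of series, taken coefficientwise.  In all uses
  below every coefficient receives only finitely many nonzero contributions.\<close>
definition ser_sum :: "('i \<Rightarrow> 'v ser) \<Rightarrow> 'i set \<Rightarrow> 'v ser" where
  "ser_sum F I = (\<lambda>m. \<Sum>\<^sub>\<infinity>i\<in>I. F i m)"

definition ser_exp :: "'v ser \<Rightarrow> 'v ser" where
  "ser_exp f = ser_sum (\<lambda>k. ser_scale (1 / fact k) (ser_pow f k)) UNIV"

definition ser_monom :: "(nat \<Rightarrow> 'w ser) \<Rightarrow> nat mon \<Rightarrow> 'w ser" where
  "ser_monom \<sigma> a = ser_prod_list (map (\<lambda>v. ser_pow (\<sigma> v) (Poly_Mapping.lookup a v)) (sorted_list_of_set (Poly_Mapping.keys a)))"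

definition ser_subst :: "(nat \<Rightarrow> 'w ser) \<Rightarrow> nat ser \<Rightarrow> 'w ser" where
  "ser_subst \<sigma> g = ser_sum (\<lambda>a. ser_scale (g a) (ser_monom \<sigma> a)) UNIV"

definition ser_det :: "nat \<Rightarrow> (nat \<Rightarrow> nat \<Rightarrow> 'v ser) \<Rightarrow> 'v ser" where
  "ser_det n M = ser_sum (\<lambda>\<pi>. ser_scale (of_int (sign \<pi>))
      (ser_prod_list (map (\<lambda>i. M i (\<pi> i)) [0..<n]))) {\<pi>. \<pi> permutes {..<n}}"

text \<open>We work with series in the nat-indexed variables; variable 0 plays the role of z
  and variable i >= 1 the role of t_i.  The generating series is
  \<open>e^{\<Sum>_{i\<ge>1} t_i z^i}\<close>.\<close>
definition gen_series :: "nat ser" where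
  "gen_series = ser_exp (ser_sum (\<lambda>i. ser_mult (ser_var i) (ser_pow (ser_var 0) i)) {1..})"

text \<open>p_k(t) = coefficient of z^k in the generating series (a series in t_1, t_2, ...);
  p_k = 0 for k < 0.\<close>
definition schur_p :: "int \<Rightarrow> nat ser" where
  "schur_p k = (if k < 0 then ser_zero
     else (\<lambda>a. if Poly_Mapping.lookup a 0 = 0 then gen_series (a + Poly_Mapping.single 0 (nat k)) else 0))"

text \<open>Young diagrams with at most n rows: weakly decreasing lists of length n (padded by 0).\<close>
definition young :: "nat \<Rightarrow> nat list set" where
  "young n = {lam. length lam = n \<and> sorted_wrt (\<lambda>x y. x \<ge> y) lam}"

definition schur :: "nat list \<Rightarrow> nat ser" where
  "schur lam = ser_det (length lam) (\<lambda>i j. schur_p (int (lam ! i) - int i + int j))"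

text \<open>Variables: Inl i is t_i, Inr i is s_i.  Semi-infinite matrices of series.\<close>
type_synonym smat = "nat \<Rightarrow> nat \<Rightarrow> (nat + nat) ser"

definition smat_mult :: "smat \<Rightarrow> smat \<Rightarrow> smat" where
  "smat_mult A B = (\<lambda>i j. ser_sum (\<lambda>k. ser_mult (A i k) (B k j)) UNIV)"

definition smat_one :: smat where
  "smat_one = (\<lambda>i j. if i = j then ser_one else ser_zero)"

definition smat_pow :: "smat \<Rightarrow> nat \<Rightarrow> smat" where
  "smat_pow A k = (smat_mult A ^^ k) smat_one"

definition smat_exp :: "smat \<Rightarrow> smat" where
  "smat_exp A = (\<lambda>i j. ser_sum (\<lambda>k. ser_scale (1 / fact k) (smat_pow A k i j)) UNIV)"

definition shift :: smat where
  "shift = (\<lambda>i j. if j = Suc i then ser_one else ser_zero)"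

definition shiftT :: smat where
  "shiftT = (\<lambda>i j. shift j i)"

definition t_flow :: smat where
  "t_flow = (\<lambda>a b. ser_sum (\<lambda>i. ser_mult (ser_var (Inl i)) (smat_pow shift i a b)) {1..})"

definition s_flow :: smat where
  "s_flow = (\<lambda>a b. ser_neg (ser_sum (\<lambda>i. ser_mult (ser_var (Inr i)) (smat_pow shiftT i a b)) {1..}))"

definition m_inf :: "(nat \<Rightarrow> nat \<Rightarrow> complex) \<Rightarrow> smat" where
  "m_inf \<mu> = smat_mult (smat_mult (smat_exp t_flow) (\<lambda>i j. ser_const (\<mu> i j))) (smat_exp s_flow)"

definition tau :: "(nat \<Rightarrow> nat \<Rightarrow> complex) \<Rightarrow> nat \<Rightarrow> (nat + nat) ser" where
  "tau \<mu> n = ser_det n (m_inf \<mu>)"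

definition t_vars :: "nat \<Rightarrow> (nat + nat) ser" where
  "t_vars i = ser_var (Inl i)"

definition neg_s_vars :: "nat \<Rightarrow> (nat + nat) ser" where
  "neg_s_vars i = ser_neg (ser_var (Inr i))"

end

theory Submission
  imports Defs
begin

abbreviation lk :: "('a \<Rightarrow>\<^sub>0 'b::zero) \<Rightarrow> 'a \<Rightarrow> 'b" where "lk \<equiv> Poly_Mapping.lookup"
abbreviation kys :: "('a \<Rightarrow>\<^sub>0 'b::zero) \<Rightarrow> 'a set" where "kys \<equiv> Poly_Mapping.keys"
abbreviation sng :: "'a \<Rightarrow> 'b \<Rightarrow> ('a \<Rightarrow>\<^sub>0 'b::zero)" where "sng \<equiv> Poly_Mapping.single"

lemma finite_below:
  fixes m :: "'v mon"
  shows "finite {a. \<forall>v. lk a v \<le> lk m v}"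
proof -
  let ?A = "{a::'v mon. \<forall>v. lk a v \<le> lk m v}"
  let ?r = "\<lambda>a::'v mon. restrict (lk a) (kys m)"
  have "?r ` ?A \<subseteq> Pi\<^sub>E (kys m) (\<lambda>v. {..lk m v})"
    by (auto simp: PiE_def Pi_def)
  hence fin: "finite (?r ` ?A)"
    by (rule finite_subset) (auto intro!: finite_PiE)
  have "inj_on ?r ?A"
  proof (rule inj_onI)
    fix a b assume a: "a \<in> ?A" and b: "b \<in> ?A" and e: "?r a = ?r b"
    show "a = b"
    proof (rule poly_mapping_eqI)
      fix v
      show "lk a v = lk b v"
      proof (cases "v \<in> kys m")
        case True
        then show ?thesis using fun_cong[OF e, of v] by simp
      next
        case False
        then have "lk m v = 0" by (simp add: in_keys_iff)
        then show ?thesis using a b by (metis le_zero_eq mem_Collect_eq)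
      qed
    qed
  qed
  then show ?thesis using fin finite_imageD by blast
qed

lemma finite_dec: "finite {(a, b). a + b = (m :: 'v mon)}"
proof -
  have "{(a, b). a + b = m} \<subseteq> {a. \<forall>v. lk a v \<le> lk m v} \<times> {a. \<forall>v. lk a v \<le> lk m v}"
    by (auto simp: lookup_add)
  then show ?thesis using finite_below by (rule finite_subset[OF _ finite_cartesian_product]) (rule finite_below)+
qed

lemma finite_dec3: "finite {(a, b, c). a + b + c = (m :: 'v mon)}"
proof -
  let ?B = "{a. \<forall>v. lk a v \<le> lk m v}"
  have "{(a, b, c). a + b + c = m} \<subseteq> ?B \<times> ?B \<times> ?B"
    by (auto simp: lookup_add)
  then show ?thesis by (rule finite_subset[OF _ finite_cartesian_product[OF finite_below finite_cartesian_product[OF finite_below finite_below]]])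
qed

lemma sum_single_supp:
  assumes "finite A" "x \<in> A" "\<And>y. y \<in> A \<Longrightarrow> y \<noteq> x \<Longrightarrow> f y = 0"
  shows "sum f A = f x"
  using assms by (simp add: sum.remove sum.neutral)

lemma infsum_supp:
  assumes "finite S" "\<And>x. x \<in> A \<Longrightarrow> x \<notin> S \<Longrightarrow> f x = 0"
  shows "infsum f A = sum f (A \<inter> S)"
proof -
  have "infsum f A = infsum f (A \<inter> S)"
    by (rule infsum_cong_neutral) (use assms in auto)
  also have "\<dots> = sum f (A \<inter> S)" using assms(1) by (simp add: infsum_finite)
  finally show ?thesis .
qed

lemma infsum_single_supp:
  assumes "\<And>y. y \<in> A \<Longrightarrow> y \<noteq> x \<Longrightarrow> f y = 0"
  shows "infsum f A = (if x \<in> A then f x else 0)"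
proof -
  have "infsum f A = sum f (A \<inter> {x})"
    by (rule infsum_supp) (use assms in auto)
  then show ?thesis by (cases "x \<in> A") auto
qed

section \<open>The ring of formal power series\<close>

typedef 'v fser = "UNIV :: 'v ser set" by simp
setup_lifting type_definition_fser

instantiation fser :: (type) comm_ring_1
begin
lift_definition zero_fser :: "'v fser" is "\<lambda>_. 0" .
lift_definition one_fser :: "'v fser" is "\<lambda>m. if m = 0 then 1 else 0" .
lift_definition plus_fser :: "'v fser \<Rightarrow> 'v fser \<Rightarrow> 'v fser" is "\<lambda>f g m. f m + g m" .
lift_definition minus_fser :: "'v fser \<Rightarrow> 'v fser \<Rightarrow> 'v fser" is "\<lambda>f g m. f m - g m" .
lift_definition uminus_fser :: "'v fser \<Rightarrow> 'v fser" is "\<lambda>f m. - f m" .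
lift_definition times_fser :: "'v fser \<Rightarrow> 'v fser \<Rightarrow> 'v fser" is ser_mult .

lemma mult_assoc_aux:
  "ser_mult (ser_mult f g) h m = (\<Sum>(c, d, e) \<in> {(a, b, c). a + b + c = m}. f c * g d * h e)"
proof -
  have "ser_mult (ser_mult f g) h m = (\<Sum>p \<in> {(a, b). a + b = m}. \<Sum>q \<in> {(c, d). c + d = fst p}. f (fst q) * g (snd q) * h (snd p))"
    unfolding ser_mult_def by (simp add: sum_distrib_right case_prod_beta)
  also have "\<dots> = (\<Sum>(p, q) \<in> Sigma {(a, b). a + b = m} (\<lambda>p. {(c, d). c + d = fst p}). f (fst q) * g (snd q) * h (snd p))"
    by (rule sum.Sigma) (auto simp: finite_dec)
  also have "\<dots> = (\<Sum>(c, d, e) \<in> {(a, b, c). a + b + c = m}. f c * g d * h e)"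
    by (rule sum.reindex_bij_witness[where i = "\<lambda>(c, d, e). ((c + d, e), (c, d))" and j = "\<lambda>((a, b), (c, d)). (c, d, b)"]) auto
  finally show ?thesis .
qed

lemma mult_assoc_aux2:
  "ser_mult f (ser_mult g h) m = (\<Sum>(c, d, e) \<in> {(a, b, c). a + b + c = m}. f c * g d * h e)"
proof -
  have "ser_mult f (ser_mult g h) m = (\<Sum>p \<in> {(a, b). a + b = m}. \<Sum>q \<in> {(c, d). c + d = snd p}. f (fst p) * g (fst q) * h (snd q))"
    unfolding ser_mult_def by (simp add: sum_distrib_left case_prod_beta mult.assoc)
  also have "\<dots> = (\<Sum>(p, q) \<in> Sigma {(a, b). a + b = m} (\<lambda>p. {(c, d). c + d = snd p}). f (fst p) * g (fst q) * h (snd q))"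
    by (rule sum.Sigma) (auto simp: finite_dec)
  also have "\<dots> = (\<Sum>(c, d, e) \<in> {(a, b, c). a + b + c = m}. f c * g d * h e)"
    by (rule sum.reindex_bij_witness[where i = "\<lambda>(c, d, e). ((c, d + e), (d, e))" and j = "\<lambda>((a, b), (c, d)). (a, c, d)"]) (auto simp: add.assoc)
  finally show ?thesis .
qed

instance
proof
  fix a b c :: "'v fser"
  show "a * b * c = a * (b * c)"
    by transfer (simp add: fun_eq_iff mult_assoc_aux mult_assoc_aux2)
  show "a * b = b * a"
    apply transfer
    unfolding ser_mult_def fun_eq_iff
    apply (intro allI)
    apply (rule sum.reindex_bij_witness[where i = "\<lambda>(a, b). (b, a)" and j = "\<lambda>(a, b). (b, a)"])
    apply (auto simp: add.commute mult.commute)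
    done
  show "1 * a = a"
  proof transfer
    fix f :: "'v ser"
    show "ser_mult (\<lambda>m. if m = 0 then 1 else 0) f = f"
    proof
      fix m
      show "ser_mult (\<lambda>m. if m = 0 then 1 else 0) f m = f m"
        unfolding ser_mult_def
        by (subst sum_single_supp[where x = "(0, m)"]) (auto simp: finite_dec split: if_splits)
    qed
  qed
  show "(a + b) * c = a * c + b * c"
    by transfer (auto simp: ser_mult_def fun_eq_iff sum.distrib[symmetric] distrib_right case_prod_beta intro!: sum.cong)
  show "a + b + c = a + (b + c)" by transfer (simp add: fun_eq_iff)
  show "a + b = b + a" by transfer (simp add: fun_eq_iff)
  show "0 + a = a" by transfer simp
  show "- a + a = 0" by transfer simp
  show "a - b = a + - b" by transfer simp
  show "(0::'v fser) \<noteq> 1" by transfer (auto simp: fun_eq_iff)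
qed
end

lemma Rep_mult: "Rep_fser (f * g) = ser_mult (Rep_fser f) (Rep_fser g)"
  by (simp add: times_fser.rep_eq)
lemma Rep_one: "Rep_fser 1 = ser_one"
  by (simp add: one_fser.rep_eq ser_one_def ser_const_def)
lemma Rep_zero: "Rep_fser 0 = ser_zero"
  unfolding zero_fser.rep_eq ser_zero_def ser_const_def by auto
lemma Rep_zero_app[simp]: "Rep_fser 0 m = 0"
  by (simp add: zero_fser.rep_eq)
lemma Rep_add[simp]: "Rep_fser (f + g) m = Rep_fser f m + Rep_fser g m"
  by (simp add: plus_fser.rep_eq)
lemma Rep_diff[simp]: "Rep_fser (f - g) m = Rep_fser f m - Rep_fser g m"
  by (simp add: minus_fser.rep_eq)
lemma Rep_uminus[simp]: "Rep_fser (- f) m = - Rep_fser f m"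
  by (simp add: uminus_fser.rep_eq)
lemma Rep_sum[simp]: "Rep_fser (sum F A) m = (\<Sum>x\<in>A. Rep_fser (F x) m)"
  by (induction A rule: infinite_finite_induct) auto
lemma ser_zero_app[simp]: "ser_zero m = 0"
  unfolding ser_zero_def ser_const_def by auto

lemma ser_mult_const_left:
  "ser_mult (ser_const c) g m = c * g m"
  unfolding ser_mult_def ser_const_def
  by (subst sum_single_supp[where x = "(0, m)"]) (auto simp: finite_dec split: if_splits)

lemma ser_mult_const_right:
  "ser_mult g (ser_const c) m = g m * c"
  unfolding ser_mult_def ser_const_def
  by (subst sum_single_supp[where x = "(m, 0)"]) (auto simp: finite_dec split: if_splits)

lemma ser_mult_zero_left[simp]: "ser_mult ser_zero g = ser_zero"
  by (simp add: fun_eq_iff ser_zero_def ser_mult_const_left, simp add: ser_const_def)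
lemma ser_mult_zero_right[simp]: "ser_mult g ser_zero = ser_zero"
  by (simp add: fun_eq_iff ser_zero_def ser_mult_const_right, simp add: ser_const_def)
lemma ser_mult_one_left[simp]: "ser_mult ser_one g = g"
  by (simp add: fun_eq_iff ser_one_def ser_mult_const_left)
lemma ser_mult_one_right[simp]: "ser_mult g ser_one = g"
  by (simp add: fun_eq_iff ser_one_def ser_mult_const_right)

definition cst :: "complex \<Rightarrow> 'v fser" where "cst c = Abs_fser (ser_const c)"

lemma Rep_cst: "Rep_fser (cst c) = ser_const c"
  by (simp add: cst_def Abs_fser_inverse)

lemma Rep_cst_mult[simp]: "Rep_fser (cst c * f) m = c * Rep_fser f m"
  by (simp add: Rep_mult Rep_cst ser_mult_const_left)

interpretation cst: comm_ring_hom cst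
proof
  show "cst 0 = 0" by (simp add: cst_def ser_const_def zero_fser_def fun_eq_iff)
  show "cst 1 = 1" by (simp add: cst_def ser_const_def one_fser_def)
  fix x y
  show "cst (x + y) = cst x + cst y"
    by (rule Rep_fser_inject[THEN iffD1]) (auto simp: Rep_cst plus_fser.rep_eq ser_const_def fun_eq_iff)
  show "cst (x * y) = cst x * cst y"
    by (rule Rep_fser_inject[THEN iffD1]) (simp add: Rep_mult Rep_cst ser_mult_const_left fun_eq_iff, simp add: ser_const_def)
qed

lemma ser_scale_eq: "ser_scale c f = Rep_fser (cst c * Abs_fser f)"
  by (simp add: fun_eq_iff ser_scale_def Abs_fser_inverse)

lemma ser_neg_eq: "ser_neg f = Rep_fser (- Abs_fser f)"
  by (simp add: fun_eq_iff ser_neg_def Abs_fser_inverse)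

lemma ser_pow_eq: "ser_pow f k = Rep_fser (Abs_fser f ^ k)"
  by (induction k) (simp_all add: ser_pow_def Rep_one Rep_mult Abs_fser_inverse)

lemma ser_prod_list_eq: "ser_prod_list fs = Rep_fser (prod_list (map Abs_fser fs))"
  by (induction fs) (simp_all add: ser_prod_list_def Rep_one Rep_mult Abs_fser_inverse)

lemma ser_sum_finite: "finite A \<Longrightarrow> ser_sum F A = Rep_fser (\<Sum>x\<in>A. Abs_fser (F x))"
  by (simp add: ser_sum_def fun_eq_iff infsum_finite Abs_fser_inverse)

lemma Rep_of_int_mult[simp]: "Rep_fser (of_int k * f) m = of_int k * Rep_fser f m"
  using Rep_cst_mult[of "of_int k" f m] by (simp add: cst.hom_of_int)

lemma ser_det_eq: "ser_det n M = Rep_fser (det (mat n n (\<lambda>(i, j). Abs_fser (M i j))))"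
proof -
  have fin: "finite {\<pi>. \<pi> permutes {..<n}}" by (simp add: finite_permutations)
  have "ser_det n M = Rep_fser (\<Sum>\<pi> | \<pi> permutes {..<n}. cst (of_int (sign \<pi>)) *
      prod_list (map (\<lambda>i. Abs_fser (M i (\<pi> i))) [0..<n]))"
    unfolding ser_det_def ser_sum_finite[OF fin] ser_scale_eq ser_prod_list_eq
    by (simp add: Abs_fser_inverse o_def Rep_fser_inverse cst.hom_of_int)
  also have "\<dots> = Rep_fser (det (mat n n (\<lambda>(i, j). Abs_fser (M i j))))"
  proof -
    have "(\<Sum>\<pi> | \<pi> permutes {..<n}. cst (of_int (sign \<pi>)) *
      prod_list (map (\<lambda>i. Abs_fser (M i (\<pi> i))) [0..<n])) =
      (\<Sum>\<pi> | \<pi> permutes {0..<n}. of_int (sign \<pi>) *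
      (\<Prod>i = 0..<n. mat n n (\<lambda>(i, j). Abs_fser (M i j)) $$ (i, \<pi> i)))"
    proof (rule sum.cong)
      show "{\<pi>. \<pi> permutes {..<n}} = {\<pi>. \<pi> permutes {0..<n}}" by (simp add: atLeast0LessThan)
    next
      fix \<pi> assume "\<pi> \<in> {\<pi>. \<pi> permutes {0..<n}}"
      hence p: "\<pi> permutes {0..<n}" by simp
      have "prod_list (map (\<lambda>i. Abs_fser (M i (\<pi> i))) [0..<n]) = (\<Prod>i = 0..<n. Abs_fser (M i (\<pi> i)))"
        by (simp add: prod.distinct_set_conv_list[symmetric])
      also have "\<dots> = (\<Prod>i = 0..<n. mat n n (\<lambda>(i, j). Abs_fser (M i j)) $$ (i, \<pi> i))"
        by (rule prod.cong) (use permutes_in_image[OF p] in auto)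
      finally show "cst (of_int (sign \<pi>)) * prod_list (map (\<lambda>i. Abs_fser (M i (\<pi> i))) [0..<n]) =
        of_int (sign \<pi>) * (\<Prod>i = 0..<n. mat n n (\<lambda>(i, j). Abs_fser (M i j)) $$ (i, \<pi> i))"
        by (simp add: cst.hom_of_int)
    qed
    then show ?thesis by (simp add: det_def)
  qed
  finally show ?thesis .
qed

definition mnm :: "'v mon \<Rightarrow> 'v fser" where
  "mnm p = Abs_fser (\<lambda>q. if q = p then 1 else 0)"

lemma Rep_mnm: "Rep_fser (mnm p) q = (if q = p then 1 else 0)"
  by (simp add: mnm_def Abs_fser_inverse)

lemma mnm_mult: "mnm p * mnm q = mnm (p + q)"
proof (rule Rep_fser_inject[THEN iffD1], rule ext)
  fix m
  show "Rep_fser (mnm p * mnm q) m = Rep_fser (mnm (p + q)) m"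
  proof -
    have e: "(\<lambda>(a, b). (if a = p then 1 else 0) * (if b = q then 1 else 0 :: complex)) = (\<lambda>x. if x = (p, q) then 1 else 0)"
      by (auto simp: fun_eq_iff)
    show ?thesis
      unfolding Rep_mult ser_mult_def Rep_mnm e using finite_dec[of m] by (simp add: eq_commute)
  qed
qed

lemma mnm_zero: "mnm 0 = 1"
  by (rule Rep_fser_inject[THEN iffD1]) (simp add: Rep_one ser_one_def ser_const_def Rep_mnm fun_eq_iff)

lemma prod_mono: "(\<Prod>v\<in>K. mnm (p v)) = mnm (\<Sum>v\<in>K. p v)"
  by (induction K rule: infinite_finite_induct) (simp_all add: mnm_zero mnm_mult)

lemma mnm_single_pow: "mnm (sng v 1) ^ k = mnm (sng v k)"
proof (induction k)
  case 0 then show ?case by (simp add: mnm_zero)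
next
  case (Suc k)
  have "sng v (Suc k) = sng v 1 + sng v k" by (simp add: single_add[symmetric])
  then show ?case using Suc by (simp add: mnm_mult)
qed

lemma mnm_single_pow': "mnm (sng v (Suc 0)) ^ k = mnm (sng v k)"
  using mnm_single_pow[of v k] by simp

lemma ser_var_eq: "ser_var v = Rep_fser (mnm (sng v 1))"
  by (simp add: ser_var_def Rep_mnm fun_eq_iff)

definition push :: "('a \<Rightarrow> 'b) \<Rightarrow> 'a mon \<Rightarrow> 'b mon" where
  "push f a = (\<Sum>v\<in>kys a. sng (f v) (lk a v))"

definition inrange :: "('a \<Rightarrow> 'b) \<Rightarrow> 'b mon \<Rightarrow> bool" where
  "inrange f m \<longleftrightarrow> (\<forall>w. w \<notin> range f \<longrightarrow> lk m w = 0)"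

lemma lk_push_in: "inj f \<Longrightarrow> lk (push f a) (f v) = lk a v"
proof -
  assume inj: "inj f"
  have "lk (push f a) (f v) = (\<Sum>u\<in>kys a. (lk a u when f u = f v))"
    by (simp add: push_def lookup_sum lookup_single)
  also have "\<dots> = (\<Sum>u\<in>kys a. (if u = v then lk a u else 0))"
    by (rule sum.cong) (auto simp: when_def dest: injD[OF inj])
  also have "\<dots> = lk a v" by (simp add: in_keys_iff)
  finally show ?thesis .
qed

lemma lk_push_out: "w \<notin> range f \<Longrightarrow> lk (push f a) w = 0"
  by (auto simp: push_def lookup_sum lookup_single when_def intro!: sum.neutral)

lemma inrange_push: "inrange f (push f a)"
  by (simp add: inrange_def lk_push_out)

lemma lk_map_key: "inj f \<Longrightarrow> lk (Poly_Mapping.map_key f m) v = lk m (f v)"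
  by (simp add: map_key.rep_eq)

lemma push_add: "inj f \<Longrightarrow> push f (a + b) = push f a + push f b"
  apply (rule poly_mapping_eqI)
  subgoal for w
    by (cases "w \<in> range f") (auto simp: lookup_add lk_push_in lk_push_out)
  done

lemma push_zero[simp]: "push f 0 = 0"
  by (simp add: push_def)

lemma map_key_push: "inj f \<Longrightarrow> Poly_Mapping.map_key f (push f a) = a"
  by (rule poly_mapping_eqI) (simp add: lk_map_key lk_push_in)

lemma push_map_key: "inj f \<Longrightarrow> inrange f m \<Longrightarrow> push f (Poly_Mapping.map_key f m) = m"
  apply (rule poly_mapping_eqI)
  subgoal for w
    by (cases "w \<in> range f") (auto simp: lk_map_key lk_push_in lk_push_out inrange_def)
  done

lemma push_inj: "inj f \<Longrightarrow> push f a = push f b \<Longrightarrow> a = b"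
  by (metis map_key_push)

definition wt :: "('v \<Rightarrow> nat) \<Rightarrow> 'v mon \<Rightarrow> nat" where
  "wt g a = (\<Sum>v\<in>kys a. lk a v * g v)"

lemma wt_superset: "finite K \<Longrightarrow> kys a \<subseteq> K \<Longrightarrow> wt g a = (\<Sum>v\<in>K. lk a v * g v)"
  unfolding wt_def by (rule sum.mono_neutral_left) (auto simp: in_keys_iff)

lemma wt_add: "wt g (a + b) = wt g a + wt g b"
proof -
  let ?K = "kys a \<union> kys b"
  have "wt g (a + b) = (\<Sum>v\<in>?K. lk (a + b) v * g v)"
    by (rule wt_superset) (use keys_add[of a b] in auto)
  also have "\<dots> = (\<Sum>v\<in>?K. lk a v * g v) + (\<Sum>v\<in>?K. lk b v * g v)"
    by (simp add: lookup_add sum.distrib algebra_simps)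
  also have "\<dots> = wt g a + wt g b"
    using wt_superset[of ?K a g] wt_superset[of ?K b g] by simp
  finally show ?thesis .
qed

lemma wt_zero[simp]: "wt g 0 = 0" by (simp add: wt_def)

lemma wt_single: "wt g (sng v k) = k * g v"
  by (cases "k = 0") (simp_all add: wt_def)

lemma wt_mono_le: "(\<And>v. lk a v \<le> lk b v) \<Longrightarrow> wt g a \<le> wt g b"
proof -
  assume le: "\<And>v. lk a v \<le> lk b v"
  have "kys a \<subseteq> kys b"
  proof
    fix x assume "x \<in> kys a"
    then have "lk a x \<noteq> 0" by (simp add: in_keys_iff)
    then have "lk b x \<noteq> 0" using le[of x] by auto
    then show "x \<in> kys b" by (simp add: in_keys_iff)
  qed
  then have "wt g a = (\<Sum>v\<in>kys b. lk a v * g v)" by (simp add: wt_superset)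
  also have "\<dots> \<le> (\<Sum>v\<in>kys b. lk b v * g v)" by (intro sum_mono mult_le_mono1 le)
  finally show ?thesis by (simp add: wt_def)
qed

lemma wt_push:
  assumes inj: "inj f"
  shows "wt g (push f a) = wt (g \<circ> f) a"
proof -
  have sub: "kys (push f a) \<subseteq> f ` kys a"
  proof
    fix w assume w: "w \<in> kys (push f a)"
    then have nz: "lk (push f a) w \<noteq> 0" by (simp add: in_keys_iff)
    then have "w \<in> range f" using lk_push_out[of w f a] by (cases "w \<in> range f") auto
    then obtain v where v: "w = f v" by blast
    then have "lk a v \<noteq> 0" using nz by (simp add: lk_push_in[OF inj])
    then show "w \<in> f ` kys a" using v by (simp add: in_keys_iff)
  qed
  have "wt g (push f a) = (\<Sum>w\<in>f ` kys a. lk (push f a) w * g w)"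
    using sub by (simp add: wt_superset)
  also have "\<dots> = (\<Sum>v\<in>kys a. lk (push f a) (f v) * g (f v))"
    using sum.reindex[OF inj_on_subset[OF inj subset_UNIV], of "\<lambda>w. lk (push f a) w * g w" "kys a"]
    by (simp add: o_def)
  also have "\<dots> = (\<Sum>v\<in>kys a. lk a v * g (f v))"
    by (simp add: lk_push_in[OF inj])
  finally show ?thesis by (simp add: wt_def)
qed

abbreviation dg :: "'v mon \<Rightarrow> nat" where "dg \<equiv> wt (\<lambda>_. 1)"

definition ren :: "('a \<Rightarrow> 'b) \<Rightarrow> complex \<Rightarrow> 'a ser \<Rightarrow> 'b ser" where
  "ren f e g = (\<lambda>m. if inrange f m then e ^ dg (Poly_Mapping.map_key f m) * g (Poly_Mapping.map_key f m) else 0)"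

lemma inrange_add: "inrange f (a + b) \<longleftrightarrow> inrange f a \<and> inrange f b"
  by (auto simp: inrange_def lookup_add)

lemma ren_mult:
  assumes inj: "inj f"
  shows "ren f e (ser_mult g h) = ser_mult (ren f e g) (ren f e h)"
proof
  fix m
  show "ren f e (ser_mult g h) m = ser_mult (ren f e g) (ren f e h) m"
  proof (cases "inrange f m")
    case False
    then show ?thesis
      by (auto simp: ren_def ser_mult_def inrange_add intro!: sum.neutral)
  next
    case True
    let ?c = "Poly_Mapping.map_key f m"
    have "ren f e (ser_mult g h) m = e ^ dg ?c * (\<Sum>(p, q)\<in>{(p, q). p + q = ?c}. g p * h q)"
      using True by (simp add: ren_def ser_mult_def)
    also have "\<dots> = (\<Sum>(p, q)\<in>{(p, q). p + q = ?c}. e ^ dg p * g p * (e ^ dg q * h q))"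
      unfolding sum_distrib_left
    proof (rule sum.cong[OF refl])
      fix x assume "x \<in> {(p, q). p + q = ?c}"
      then obtain p q where pq: "x = (p, q)" "p + q = ?c" by auto
      have "e ^ dg ?c = e ^ dg p * e ^ dg q" using pq(2)
        by (simp add: wt_add[symmetric] power_add[symmetric])
      then show "e ^ dg ?c * (case x of (p, q) \<Rightarrow> g p * h q) = (case x of (p, q) \<Rightarrow> e ^ dg p * g p * (e ^ dg q * h q))"
        using pq by simp
    qed
    also have "\<dots> = (\<Sum>(m1, m2)\<in>{(a, b). a + b = m}. ren f e g m1 * ren f e h m2)"
    proof (rule sum.reindex_bij_witness[where i = "\<lambda>(m1, m2). (Poly_Mapping.map_key f m1, Poly_Mapping.map_key f m2)"
          and j = "\<lambda>(p, q). (push f p, push f q)"])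
      fix b assume "b \<in> {(p, q). p + q = ?c}"
      then obtain p q where b: "b = (p, q)" "p + q = ?c" by auto
      show "(case case b of (p, q) \<Rightarrow> (push f p, push f q) of
          (m1, m2) \<Rightarrow> (Poly_Mapping.map_key f m1, Poly_Mapping.map_key f m2)) = b"
        using b by (simp add: map_key_push inj)
      have "push f p + push f q = m"
        using b by (simp add: push_add[OF inj, symmetric] push_map_key[OF inj True])
      then show "(case b of (p, q) \<Rightarrow> (push f p, push f q)) \<in> {(a, b). a + b = m}"
        using b by simp
      show "(case case b of (p, q) \<Rightarrow> (push f p, push f q) of (m1, m2) \<Rightarrow> ren f e g m1 * ren f e h m2) =
          (case b of (p, q) \<Rightarrow> e ^ dg p * g p * (e ^ dg q * h q))"
        using b by (simp add: ren_def inrange_push map_key_push inj)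
    next
      fix a assume "a \<in> {(a, b). a + b = m}"
      then obtain m1 m2 where a: "a = (m1, m2)" "m1 + m2 = m" by auto
      then have r: "inrange f m1" "inrange f m2" using True inrange_add by auto
      show "(case case a of (m1, m2) \<Rightarrow> (Poly_Mapping.map_key f m1, Poly_Mapping.map_key f m2) of
          (p, q) \<Rightarrow> (push f p, push f q)) = a"
        using a r by (simp add: push_map_key inj)
      show "(case a of (m1, m2) \<Rightarrow> (Poly_Mapping.map_key f m1, Poly_Mapping.map_key f m2)) \<in> {(p, q). p + q = ?c}"
        using a(1) by (simp add: a(2)[symmetric] map_key_plus[OF inj])
    qed
    finally show ?thesis by (simp add: ser_mult_def)
  qed
qed

lemma ren_one: "inj f \<Longrightarrow> ren f e ser_one = ser_one"
proof
  fix m assume inj: "inj f"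
  show "ren f e ser_one m = ser_one m"
  proof (cases "inrange f m")
    case True
    then have "Poly_Mapping.map_key f m = 0 \<longleftrightarrow> m = 0"
      by (metis inj map_key_zero push_map_key push_zero)
    then show ?thesis using True by (simp add: ren_def ser_one_def ser_const_def map_key_zero[OF inj])
  next
    case False
    then have "m \<noteq> 0" by (auto simp: inrange_def)
    then show ?thesis using False by (simp add: ren_def ser_one_def ser_const_def)
  qed
qed

definition renh :: "('a \<Rightarrow> 'b) \<Rightarrow> complex \<Rightarrow> 'a fser \<Rightarrow> 'b fser" where
  "renh f e x = Abs_fser (ren f e (Rep_fser x))"

lemma Rep_renh: "Rep_fser (renh f e x) = ren f e (Rep_fser x)"
  by (simp add: renh_def Abs_fser_inverse)

lemma renh_hom: "inj f \<Longrightarrow> comm_ring_hom (renh f e)"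
  apply unfold_locales
  subgoal by (rule Rep_fser_inject[THEN iffD1]; simp add: Rep_renh Rep_zero ren_def fun_eq_iff)
  subgoal by (rule Rep_fser_inject[THEN iffD1]; simp add: Rep_renh ren_def plus_fser.rep_eq fun_eq_iff algebra_simps)
  subgoal by (rule Rep_fser_inject[THEN iffD1]; simp add: Rep_renh Rep_one ren_one)
  subgoal by (rule Rep_fser_inject[THEN iffD1]; simp add: Rep_renh Rep_mult ren_mult)
  done

lemma pow_var: "(cst e * mnm (sng w 1)) ^ k = cst (e ^ k) * mnm (sng w k)"
  by (simp add: power_mult_distrib mnm_single_pow mnm_single_pow' cst.hom_power)

lemma ser_monom_eq:
  assumes "\<And>v. \<sigma> v = Rep_fser (cst e * mnm (sng (f v) 1))"
  shows "ser_monom \<sigma> a = Rep_fser (cst (e ^ dg a) * mnm (push f a))"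
proof -
  have "ser_monom \<sigma> a = Rep_fser (\<Prod>v\<in>kys a. (cst e * mnm (sng (f v) 1)) ^ lk a v)"
    unfolding ser_monom_def ser_prod_list_eq ser_pow_eq assms
    by (simp add: Rep_fser_inverse Abs_fser_inverse o_def prod.distinct_set_conv_list[symmetric])
  also have "(\<Prod>v\<in>kys a. (cst e * mnm (sng (f v) 1)) ^ lk a v) =
      (\<Prod>v\<in>kys a. cst (e ^ lk a v) * mnm (sng (f v) (lk a v)))"
    unfolding pow_var by (rule refl)
  also have "\<dots> = cst (e ^ dg a) * mnm (push f a)"
    by (simp add: prod.distrib prod_mono cst.hom_prod[symmetric] power_sum[symmetric] push_def wt_def)
  finally show ?thesis .
qed

lemma ser_subst_eq:
  fixes f :: "nat \<Rightarrow> 'b"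
  assumes inj: "inj f" and s: "\<And>v. \<sigma> v = Rep_fser (cst e * mnm (sng (f v) 1))"
  shows "ser_subst \<sigma> g = ren f e g"
proof
  fix m :: "'b mon"
  let ?c = "Poly_Mapping.map_key f m"
  have "ser_subst \<sigma> g m = (\<Sum>\<^sub>\<infinity>a\<in>UNIV. g a * (e ^ dg a * (if m = push f a then 1 else 0)))"
    by (simp add: ser_subst_def ser_sum_def ser_scale_def ser_monom_eq[OF s] Rep_mnm)
  also have "\<dots> = g ?c * (e ^ dg ?c * (if m = push f ?c then 1 else 0))"
    by (subst infsum_single_supp[where x = ?c]) (auto simp: map_key_push inj)
  also have "\<dots> = ren f e g m"
  proof (cases "inrange f m")
    case True
    then show ?thesis by (simp add: ren_def push_map_key inj)
  next
    case False
    then have "m \<noteq> push f ?c" using inrange_push by metis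
    then show ?thesis using False by (simp add: ren_def)
  qed
  finally show "ser_subst \<sigma> g m = ren f e g m" .
qed

lemma t_vars_eq: "ser_subst t_vars g = ren Inl 1 g"
  by (rule ser_subst_eq) (simp_all add: t_vars_def ser_var_eq cst.hom_one)

lemma neg_s_vars_eq: "ser_subst neg_s_vars g = ren Inr (-1) g"
proof (rule ser_subst_eq)
  fix v
  have "cst (-1) = (-1 :: (nat + nat) fser)" by (simp add: cst.hom_uminus)
  then show "neg_s_vars v = Rep_fser (cst (- 1) * mnm (sng (Inr v) 1))"
    by (simp add: neg_s_vars_def ser_var_eq ser_neg_eq Rep_fser_inverse)
qed simp

lemma lk_sng: "lk (sng a k) v = (if a = v then k else 0)"
  by (simp add: lookup_single when_def)

section \<open>Coefficient extraction in z = variable 0\<close>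

definition cz :: "int \<Rightarrow> nat ser \<Rightarrow> nat ser" where
  "cz d F = (if d < 0 then ser_zero else (\<lambda>c. if lk c 0 = 0 then F (c + sng 0 (nat d)) else 0))"

lemma schur_p_cz: "schur_p d = cz d gen_series"
  by (simp add: schur_p_def cz_def)

lemma cz_mult:
  "Abs_fser (cz (int d) (ser_mult F G)) =
    (\<Sum>e\<in>{0..d}. Abs_fser (cz (int e) F) * Abs_fser (cz (int (d - e)) G))"
proof (rule Rep_fser_inject[THEN iffD1], rule ext)
  fix c :: "nat mon"
  let ?S = "{(p, q). p + q = c \<and> lk p 0 = 0 \<and> lk q 0 = 0}"
  have R: "Rep_fser (\<Sum>e\<in>{0..d}. Abs_fser (cz (int e) F) * Abs_fser (cz (int (d - e)) G)) c =
    (\<Sum>e\<in>{0..d}. \<Sum>x\<in>{(p, q). p + q = c}. cz (int e) F (fst x) * cz (int (d - e)) G (snd x))"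
    by (simp add: Rep_mult ser_mult_def Abs_fser_inverse case_prod_beta)
  show "Rep_fser (Abs_fser (cz (int d) (ser_mult F G))) c =
    Rep_fser (\<Sum>e\<in>{0..d}. Abs_fser (cz (int e) F) * Abs_fser (cz (int (d - e)) G)) c"
  proof (cases "lk c 0 = 0")
    case False
    show ?thesis unfolding R using False
      by (auto simp: Abs_fser_inverse cz_def lookup_add intro!: sum.neutral)
  next
    case True
    have "(\<Sum>e\<in>{0..d}. \<Sum>x\<in>{(p, q). p + q = c}. cz (int e) F (fst x) * cz (int (d - e)) G (snd x)) =
      (\<Sum>e\<in>{0..d}. \<Sum>x\<in>?S. F (fst x + sng 0 e) * G (snd x + sng 0 (d - e)))"
    proof (rule sum.cong[OF refl])
      fix e
      have "(\<Sum>x\<in>{(p, q). p + q = c}. cz (int e) F (fst x) * cz (int (d - e)) G (snd x)) =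
        (\<Sum>x\<in>{(p, q). p + q = c}. if lk (fst x) 0 = 0 \<and> lk (snd x) 0 = 0 then F (fst x + sng 0 e) * G (snd x + sng 0 (d - e)) else 0)"
        by (rule sum.cong) (auto simp: cz_def)
      also have "\<dots> = (\<Sum>x\<in>{x \<in> {(p, q). p + q = c}. lk (fst x) 0 = 0 \<and> lk (snd x) 0 = 0}. F (fst x + sng 0 e) * G (snd x + sng 0 (d - e)))"
        by (rule sum.inter_filter[symmetric]) (rule finite_dec)
      also have "{x \<in> {(p, q). p + q = c}. lk (fst x) 0 = 0 \<and> lk (snd x) 0 = 0} = ?S" by auto
      finally show "(\<Sum>x\<in>{(p, q). p + q = c}. cz (int e) F (fst x) * cz (int (d - e)) G (snd x)) =
        (\<Sum>x\<in>?S. F (fst x + sng 0 e) * G (snd x + sng 0 (d - e)))" .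
    qed
    also have "\<dots> = (\<Sum>(e, x)\<in>Sigma {0..d} (\<lambda>_. ?S). F (fst x + sng 0 e) * G (snd x + sng 0 (d - e)))"
      by (subst sum.Sigma) (auto intro: finite_subset[OF _ finite_dec])
    also have "\<dots> = (\<Sum>(P, Q)\<in>{(P, Q). P + Q = c + sng 0 d}. F P * G Q)"
    proof (rule sum.reindex_bij_witness[where j = "\<lambda>(e, x). (fst x + sng 0 e, snd x + sng 0 (d - e))"
        and i = "\<lambda>(P, Q). (lk P 0, (P - sng 0 (lk P 0), Q - sng 0 (lk Q 0)))"])
      fix a assume a: "a \<in> Sigma {0..d} (\<lambda>_. ?S)"
      then obtain e p q where a': "a = (e, (p, q))" "e \<le> d" "p + q = c" "lk p 0 = 0" "lk q 0 = 0" by auto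
      show "(case case a of (e, x) \<Rightarrow> (fst x + sng 0 e, snd x + sng 0 (d - e)) of
          (P, Q) \<Rightarrow> (lk P 0, P - sng 0 (lk P 0), Q - sng 0 (lk Q 0))) = a"
        using a' by (simp add: lookup_add lk_sng)
      have "p + sng 0 e + (q + sng 0 (d - e)) = (p + q) + (sng 0 e + sng 0 (d - e))"
        by (simp add: add_ac)
      also have "sng 0 e + sng 0 (d - e) = sng 0 d"
        using a'(2) by (simp add: single_add[symmetric])
      finally show "(case a of (e, x) \<Rightarrow> (fst x + sng 0 e, snd x + sng 0 (d - e))) \<in> {(P, Q). P + Q = c + sng 0 d}"
        using a' by simp
      show "(case case a of (e, x) \<Rightarrow> (fst x + sng 0 e, snd x + sng 0 (d - e)) of (P, Q) \<Rightarrow> F P * G Q) =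
          (case a of (e, x) \<Rightarrow> F (fst x + sng 0 e) * G (snd x + sng 0 (d - e)))"
        using a' by simp
    next
      fix b assume "b \<in> {(P, Q). P + Q = c + sng 0 d}"
      then obtain P Q where b: "b = (P, Q)" "P + Q = c + sng 0 d" by auto
      have l0: "lk P 0 + lk Q 0 = d"
        using arg_cong[OF b(2), of "\<lambda>x. lk x 0"] True by (simp add: lookup_add lk_sng)
      have lv: "lk P v + lk Q v = lk c v" if "v \<noteq> 0" for v
        using arg_cong[OF b(2), of "\<lambda>x. lk x v"] that by (simp add: lookup_add lk_sng)
      have eP: "P - sng 0 (lk P 0) + sng 0 (lk P 0) = P"
        by (rule poly_mapping_eqI) (simp add: lookup_add lookup_minus lk_sng)
      have eQ: "Q - sng 0 (lk Q 0) + sng 0 (d - lk P 0) = Q"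
        using l0 by (intro poly_mapping_eqI) (auto simp: lookup_add lookup_minus lk_sng)
      show "(case case b of (P, Q) \<Rightarrow> (lk P 0, P - sng 0 (lk P 0), Q - sng 0 (lk Q 0)) of
          (e, x) \<Rightarrow> (fst x + sng 0 e, snd x + sng 0 (d - e))) = b"
        using b eP eQ by simp
      have "P - sng 0 (lk P 0) + (Q - sng 0 (lk Q 0)) = c"
      proof (rule poly_mapping_eqI)
        fix v show "lk (P - sng 0 (lk P 0) + (Q - sng 0 (lk Q 0))) v = lk c v"
          using lv[of v] True by (cases "v = 0") (auto simp: lookup_add lookup_minus lk_sng)
      qed
      then show "(case b of (P, Q) \<Rightarrow> (lk P 0, P - sng 0 (lk P 0), Q - sng 0 (lk Q 0))) \<in> Sigma {0..d} (\<lambda>_. ?S)"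
        using b l0 by (auto simp: lookup_minus lk_sng)
    qed
    finally show ?thesis unfolding R using True
      by (simp add: Abs_fser_inverse cz_def ser_mult_def case_prod_beta)
  qed
qed


section \<open>Toeplitz matrices\<close>

definition Tt :: "nat ser \<Rightarrow> int \<Rightarrow> (nat + nat) fser" where
  "Tt F d = renh Inl 1 (Abs_fser (cz d F))"
definition Ts :: "nat ser \<Rightarrow> int \<Rightarrow> (nat + nat) fser" where
  "Ts F d = renh Inr (-1) (Abs_fser (cz d F))"

interpretation rt: comm_ring_hom "renh (Inl :: nat \<Rightarrow> nat + nat) 1"
  by (rule renh_hom) simp
interpretation rs: comm_ring_hom "renh (Inr :: nat \<Rightarrow> nat + nat) (-1)"
  by (rule renh_hom) simp

lemma Abs_ser_zero: "Abs_fser ser_zero = 0"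
  by (metis Rep_fser_inverse Rep_zero)
lemma Abs_ser_one: "Abs_fser ser_one = 1"
  by (metis Rep_fser_inverse Rep_one)

lemma Tt_neg: "d < 0 \<Longrightarrow> Tt F d = 0"
  by (simp add: Tt_def cz_def Abs_ser_zero)
lemma Ts_neg: "d < 0 \<Longrightarrow> Ts F d = 0"
  by (simp add: Ts_def cz_def Abs_ser_zero)

lemma smat_mult_fin:
  assumes "finite K" "\<And>k. k \<notin> K \<Longrightarrow> \<alpha> k * \<beta> k = 0"
  shows "ser_sum (\<lambda>k. ser_mult (Rep_fser (\<alpha> k)) (Rep_fser (\<beta> k))) UNIV = Rep_fser (\<Sum>k\<in>K. \<alpha> k * \<beta> k)"
proof
  fix m
  have "ser_sum (\<lambda>k. ser_mult (Rep_fser (\<alpha> k)) (Rep_fser (\<beta> k))) UNIV m = (\<Sum>\<^sub>\<infinity>k\<in>UNIV. Rep_fser (\<alpha> k * \<beta> k) m)"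
    by (simp add: ser_sum_def Rep_mult)
  also have "\<dots> = (\<Sum>k\<in>K. Rep_fser (\<alpha> k * \<beta> k) m)"
    by (subst infsum_supp[where S = K]) (auto simp: assms)
  finally show "ser_sum (\<lambda>k. ser_mult (Rep_fser (\<alpha> k)) (Rep_fser (\<beta> k))) UNIV m = Rep_fser (\<Sum>k\<in>K. \<alpha> k * \<beta> k) m"
    by simp
qed

lemma Tt_conv: "(\<Sum>e\<in>{0..d}. Tt F (int e) * Tt G (int (d - e))) = Tt (ser_mult F G) (int d)"
  by (simp add: Tt_def cz_mult rt.hom_sum rt.hom_mult)

lemma Ts_conv: "(\<Sum>e\<in>{0..d}. Ts F (int e) * Ts G (int (d - e))) = Ts (ser_mult F G) (int d)"
  by (simp add: Ts_def cz_mult rs.hom_sum rs.hom_mult)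

lemma ser_mult_commute: "ser_mult F G = ser_mult G F"
  by (metis Abs_fser_inverse Rep_mult UNIV_I mult.commute)

lemma Tt_prod:
  "smat_mult (\<lambda>a b. Rep_fser (Tt F (int b - int a))) (\<lambda>a b. Rep_fser (Tt G (int b - int a))) a b =
   Rep_fser (Tt (ser_mult F G) (int b - int a))"
  unfolding smat_mult_def
proof (rule trans[OF smat_mult_fin[where K = "{a..b}"]])
  fix k assume "k \<notin> {a..b}"
  then show "Tt F (int k - int a) * Tt G (int b - int k) = 0"
    by (cases "k < a") (auto simp: Tt_neg)
next
  show "Rep_fser (\<Sum>k\<in>{a..b}. Tt F (int k - int a) * Tt G (int b - int k)) = Rep_fser (Tt (ser_mult F G) (int b - int a))"
  proof (cases "a \<le> b")
    case True
    define d where "d = b - a"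
    have b: "b = d + a" using True by (simp add: d_def)
    have "(\<Sum>k\<in>{a..b}. Tt F (int k - int a) * Tt G (int b - int k)) = (\<Sum>e\<in>{0..d}. Tt F (int e) * Tt G (int d - int e))"
      unfolding b using sum.shift_bounds_cl_nat_ivl[of "\<lambda>k. Tt F (int k - int a) * Tt G (int (d + a) - int k)" 0 a d]
      by (simp add: algebra_simps)
    also have "\<dots> = (\<Sum>e\<in>{0..d}. Tt F (int e) * Tt G (int (d - e)))"
      by (rule sum.cong) (auto simp: of_nat_diff)
    also have "\<dots> = Tt (ser_mult F G) (int b - int a)"
    proof -
      have "int b - int a = int d" using b by simp
      then show ?thesis by (simp only: Tt_conv)
    qed
    finally show ?thesis by simp
  next
    case False
    then show ?thesis by (simp add: Tt_neg)
  qed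
qed simp

lemma Ts_prod:
  "smat_mult (\<lambda>a b. Rep_fser (Ts F (int a - int b))) (\<lambda>a b. Rep_fser (Ts G (int a - int b))) a b =
   Rep_fser (Ts (ser_mult F G) (int a - int b))"
  unfolding smat_mult_def
proof (rule trans[OF smat_mult_fin[where K = "{b..a}"]])
  fix k assume "k \<notin> {b..a}"
  then show "Ts F (int a - int k) * Ts G (int k - int b) = 0"
    by (cases "k < b") (auto simp: Ts_neg)
next
  show "Rep_fser (\<Sum>k\<in>{b..a}. Ts F (int a - int k) * Ts G (int k - int b)) = Rep_fser (Ts (ser_mult F G) (int a - int b))"
  proof (cases "b \<le> a")
    case True
    define d where "d = a - b"
    have a: "a = d + b" using True by (simp add: d_def)
    have "(\<Sum>k\<in>{b..a}. Ts F (int a - int k) * Ts G (int k - int b)) = (\<Sum>e\<in>{0..d}. Ts F (int d - int e) * Ts G (int e))"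
      unfolding a using sum.shift_bounds_cl_nat_ivl[of "\<lambda>k. Ts F (int (d + b) - int k) * Ts G (int k - int b)" 0 b d]
      by (simp add: algebra_simps)
    also have "\<dots> = (\<Sum>e\<in>{0..d}. Ts G (int e) * Ts F (int (d - e)))"
      by (rule sum.cong) (auto simp: of_nat_diff mult.commute)
    also have "\<dots> = Ts (ser_mult F G) (int a - int b)"
    proof -
      have "int a - int b = int d" using a by simp
      then show ?thesis by (simp only: Ts_conv ser_mult_commute)
    qed
    finally show ?thesis by simp
  next
    case False
    then show ?thesis by (simp add: Ts_neg)
  qed
qed simp

lemma cz_one: "cz d ser_one = (if d = 0 then ser_one else ser_zero)"
proof -
  have "c + sng 0 (nat d) \<noteq> 0" if "d > 0" for c :: "nat mon"
  proof
    assume "c + sng 0 (nat d) = 0"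
    then have "lk (c + sng 0 (nat d)) 0 = 0" by simp
    then show False using that by (simp add: lookup_add lk_sng)
  qed
  then show ?thesis
    by (auto simp: cz_def ser_one_def ser_const_def fun_eq_iff)
qed

lemma Tt_one: "Tt ser_one d = (if d = 0 then 1 else 0)"
  by (simp add: Tt_def cz_one Abs_ser_zero Abs_ser_one)
lemma Ts_one: "Ts ser_one d = (if d = 0 then 1 else 0)"
  by (simp add: Ts_def cz_one Abs_ser_zero Abs_ser_one)

lemma smat_pow_Tt:
  "smat_pow (\<lambda>a b. Rep_fser (Tt F (int b - int a))) k = (\<lambda>a b. Rep_fser (Tt (ser_pow F k) (int b - int a)))"
proof (induction k)
  case 0
  show ?case by (auto simp: smat_pow_def ser_pow_def smat_one_def Tt_one Rep_one Rep_zero fun_eq_iff)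
next
  case (Suc k)
  have "smat_pow (\<lambda>a b. Rep_fser (Tt F (int b - int a))) (Suc k) =
    smat_mult (\<lambda>a b. Rep_fser (Tt F (int b - int a))) (smat_pow (\<lambda>a b. Rep_fser (Tt F (int b - int a))) k)"
    by (simp add: smat_pow_def)
  also have "\<dots> = (\<lambda>a b. Rep_fser (Tt (ser_pow F (Suc k)) (int b - int a)))"
    unfolding Suc by (simp add: fun_eq_iff Tt_prod ser_pow_def)
  finally show ?case .
qed

lemma smat_pow_Ts:
  "smat_pow (\<lambda>a b. Rep_fser (Ts F (int a - int b))) k = (\<lambda>a b. Rep_fser (Ts (ser_pow F k) (int a - int b)))"
proof (induction k)
  case 0
  show ?case by (auto simp: smat_pow_def ser_pow_def smat_one_def Ts_one Rep_one Rep_zero fun_eq_iff)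
next
  case (Suc k)
  have "smat_pow (\<lambda>a b. Rep_fser (Ts F (int a - int b))) (Suc k) =
    smat_mult (\<lambda>a b. Rep_fser (Ts F (int a - int b))) (smat_pow (\<lambda>a b. Rep_fser (Ts F (int a - int b))) k)"
    by (simp add: smat_pow_def)
  also have "\<dots> = (\<lambda>a b. Rep_fser (Ts (ser_pow F (Suc k)) (int a - int b)))"
    unfolding Suc by (simp add: fun_eq_iff Ts_prod ser_pow_def)
  finally show ?case .
qed

lemma Rep_renh_cz:
  "Rep_fser (renh f e (Abs_fser (cz d F))) m =
    (if inrange f m \<and> 0 \<le> d \<and> lk (Poly_Mapping.map_key f m) 0 = 0
     then e ^ dg (Poly_Mapping.map_key f m) * F (Poly_Mapping.map_key f m + sng 0 (nat d)) else 0)"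
  by (simp add: Rep_renh Abs_fser_inverse ren_def cz_def)

lemma lin_ser_sum:
  assumes "\<And>F. L F = (if P then \<alpha> * F p else 0)"
  shows "L (ser_sum G I) = (\<Sum>\<^sub>\<infinity>i\<in>I. L (G i))"
  by (cases P) (simp_all add: assms ser_sum_def infsum_cmult_right')

lemma lin_scale:
  assumes "\<And>F. L F = (if P then \<alpha> * F p else 0)"
  shows "L (ser_scale c F) = c * L F"
  by (simp add: assms ser_scale_def)

lemma renh_cz_exp:
  "Rep_fser (renh f e (Abs_fser (cz d (ser_exp F)))) m =
   (\<Sum>\<^sub>\<infinity>k\<in>UNIV. 1 / fact k * Rep_fser (renh f e (Abs_fser (cz d (ser_pow F k)))) m)"
proof -
  let ?L = "\<lambda>F. Rep_fser (renh f e (Abs_fser (cz d F))) m"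
  have L: "\<And>F. ?L F = (if inrange f m \<and> 0 \<le> d \<and> lk (Poly_Mapping.map_key f m) 0 = 0
     then e ^ dg (Poly_Mapping.map_key f m) * F (Poly_Mapping.map_key f m + sng 0 (nat d)) else 0)"
    by (rule Rep_renh_cz)
  show ?thesis
    unfolding ser_exp_def lin_ser_sum[of ?L, OF L] lin_scale[of ?L, OF L] by simp
qed

lemma smat_exp_Tt:
  "smat_exp (\<lambda>a b. Rep_fser (Tt F (int b - int a))) a b = Rep_fser (Tt (ser_exp F) (int b - int a))"
  by (rule ext) (unfold smat_exp_def smat_pow_Tt, simp add: ser_sum_def ser_scale_def Tt_def renh_cz_exp)

lemma smat_exp_Ts:
  "smat_exp (\<lambda>a b. Rep_fser (Ts F (int a - int b))) a b = Rep_fser (Ts (ser_exp F) (int a - int b))"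
  by (rule ext) (unfold smat_exp_def smat_pow_Ts, simp add: ser_sum_def ser_scale_def Ts_def renh_cz_exp)

definition Zs :: "nat ser" where
  "Zs = ser_sum (\<lambda>i. ser_mult (ser_var i) (ser_pow (ser_var 0) i)) {1..}"

lemma gen_series_Zs: "gen_series = ser_exp Zs"
  by (simp add: gen_series_def Zs_def)

lemma Zs_term: "ser_mult (ser_var i) (ser_pow (ser_var 0) i) = Rep_fser (mnm (sng i 1 + sng 0 i))"
  by (simp add: ser_var_eq ser_pow_eq Rep_fser_inverse mnm_single_pow mnm_single_pow' Rep_mult[symmetric] mnm_mult)

lemma Zs_app: "Zs x = (\<Sum>\<^sub>\<infinity>i\<in>{1..}. if x = sng i 1 + sng 0 i then 1 else 0)"
  by (simp add: Zs_def ser_sum_def Zs_term Rep_mnm)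

lemma cz_Zs: "cz d Zs = (if 1 \<le> d then ser_var (nat d) else ser_zero)"
proof (rule ext)
  fix c :: "nat mon"
  show "cz d Zs c = (if 1 \<le> d then ser_var (nat d) else ser_zero) c"
  proof (cases "d < 0")
    case True then show ?thesis by (simp add: cz_def)
  next
    case False
    define n where "n = nat d"
    have dn: "d = int n" using False by (simp add: n_def)
    show ?thesis
    proof (cases "lk c 0 = 0")
      case c0: True
      have "Zs (c + sng 0 n) = (if 1 \<le> n \<and> c = sng n 1 then 1 else 0)"
      proof -
        have "Zs (c + sng 0 n) = (if n \<in> {1..} then (if c + sng 0 n = sng n 1 + sng 0 n then 1 else 0) else 0)"
          unfolding Zs_app
        proof (rule infsum_single_supp)
          fix i assume i: "i \<in> {1..}" "i \<noteq> n"
          have "c + sng 0 n \<noteq> sng i 1 + sng 0 i"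
          proof
            assume "c + sng 0 n = sng i 1 + sng 0 i"
            from arg_cong[OF this, of "\<lambda>x. lk x 0"] have "n = i"
              using c0 i by (simp add: lookup_add lk_sng)
            then show False using i by simp
          qed
          then show "(if c + sng 0 n = sng i 1 + sng 0 i then 1 else 0) = (0::complex)" by simp
        qed
        then show ?thesis by auto
      qed
      then show ?thesis using c0 by (auto simp: cz_def dn ser_var_def ser_zero_def ser_const_def)
    next
      case c0: False
      have "c \<noteq> sng n 1" if "1 \<le> n" using c0 that by (auto simp: lk_sng)
      then show ?thesis using c0 by (auto simp: cz_def dn ser_var_def)
    qed
  qed
qed

lemma push_single: "inj f \<Longrightarrow> push f (sng v k) = sng (f v) k"
  apply (rule poly_mapping_eqI)
  subgoal for w
    by (cases "w \<in> range f") (auto simp: lk_push_in lk_push_out lk_sng dest: injD)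
  done

lemma renh_mnm:
  assumes inj: "inj f"
  shows "renh f e (mnm p) = cst (e ^ dg p) * mnm (push f p)"
proof (rule Rep_fser_inject[THEN iffD1], rule ext)
  fix m
  show "Rep_fser (renh f e (mnm p)) m = Rep_fser (cst (e ^ dg p) * mnm (push f p)) m"
  proof (cases "m = push f p")
    case True
    then show ?thesis by (simp add: Rep_renh ren_def Rep_mnm inrange_push map_key_push inj)
  next
    case False
    have "\<not> (inrange f m \<and> Poly_Mapping.map_key f m = p)"
      using False push_map_key[OF inj] by metis
    then show ?thesis using False by (auto simp: Rep_renh ren_def Rep_mnm)
  qed
qed

lemma Tt_Zs: "Tt Zs d = (if 1 \<le> d then mnm (sng (Inl (nat d)) 1) else 0)"
  by (simp add: Tt_def cz_Zs ser_var_eq Rep_fser_inverse renh_mnm push_single wt_single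
      Abs_ser_zero cst.hom_one)

lemma Ts_Zs: "Ts Zs d = (if 1 \<le> d then - mnm (sng (Inr (nat d)) 1) else 0)"
proof -
  have "cst (-1) = (-1 :: (nat + nat) fser)" by (simp add: cst.hom_uminus)
  then show ?thesis
    by (simp add: Ts_def cz_Zs ser_var_eq Rep_fser_inverse renh_mnm push_single wt_single Abs_ser_zero)
qed

lemma shift_pow: "smat_pow shift i a b = (if b = a + i then ser_one else ser_zero)"
proof (induction i arbitrary: a)
  case 0
  then show ?case by (simp add: smat_pow_def smat_one_def)
next
  case (Suc i)
  have "smat_pow shift (Suc i) a b = ser_sum (\<lambda>k. ser_mult (shift a k) (smat_pow shift i k b)) UNIV"
    by (simp add: smat_pow_def smat_mult_def)
  also have "\<dots> = smat_pow shift i (Suc a) b"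
  proof
    fix m
    have "ser_sum (\<lambda>k. ser_mult (shift a k) (smat_pow shift i k b)) UNIV m =
      ser_mult (shift a (Suc a)) (smat_pow shift i (Suc a) b) m"
      unfolding ser_sum_def
      by (subst infsum_single_supp[where x = "Suc a"]) (auto simp: shift_def)
    then show "ser_sum (\<lambda>k. ser_mult (shift a k) (smat_pow shift i k b)) UNIV m = smat_pow shift i (Suc a) b m"
      by (simp add: shift_def)
  qed
  finally show ?case using Suc by simp
qed

lemma shiftT_pow: "smat_pow shiftT i a b = (if a = b + i then ser_one else ser_zero)"
proof (induction i arbitrary: a)
  case 0
  then show ?case by (auto simp: smat_pow_def smat_one_def)
next
  case (Suc i)
  have "smat_pow shiftT (Suc i) a b = ser_sum (\<lambda>k. ser_mult (shiftT a k) (smat_pow shiftT i k b)) UNIV"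
    by (simp add: smat_pow_def smat_mult_def)
  also have "\<dots> = (if a = b + Suc i then ser_one else ser_zero)"
  proof
    fix m
    show "ser_sum (\<lambda>k. ser_mult (shiftT a k) (smat_pow shiftT i k b)) UNIV m = (if a = b + Suc i then ser_one else ser_zero) m"
    proof (cases a)
      case 0
      then show ?thesis by (simp add: ser_sum_def shiftT_def shift_def)
    next
      case (Suc a')
      have "ser_sum (\<lambda>k. ser_mult (shiftT a k) (smat_pow shiftT i k b)) UNIV m =
        ser_mult (shiftT a a') (smat_pow shiftT i a' b) m"
        unfolding ser_sum_def
        by (subst infsum_single_supp[where x = a']) (auto simp: shiftT_def shift_def Suc)
      then show ?thesis using Suc.IH[of a'] by (simp add: shiftT_def shift_def Suc)
    qed
  qed
  finally show ?case .
qed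

lemma ser_mult_if_one: "ser_mult f (if P then ser_one else ser_zero) m = (if P then f m else 0)"
  by simp

lemma t_flow_eq: "t_flow = (\<lambda>a b. Rep_fser (Tt Zs (int b - int a)))"
proof (intro ext)
  fix a b m
  have "t_flow a b m = (\<Sum>\<^sub>\<infinity>i\<in>{1..}. if b = a + i then ser_var (Inl i) m else 0)"
    unfolding t_flow_def ser_sum_def shift_pow by (intro infsum_cong) (simp add: Rep_one[symmetric] Rep_zero[symmetric] ser_var_eq Rep_mult[symmetric])
  also have "\<dots> = (if b - a \<in> {1..} then (if b = a + (b - a) then ser_var (Inl (b - a)) m else 0) else 0)"
  proof (rule infsum_single_supp)
    fix y assume "y \<noteq> b - a"
    then have "b \<noteq> a + y" by auto
    then show "(if b = a + y then ser_var (Inl y) m else 0) = 0" by simp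
  qed
  also have "\<dots> = Rep_fser (Tt Zs (int b - int a)) m"
  proof (cases "a < b")
    case True
    then have "nat (int b - int a) = b - a" "b - a \<in> {1..}" "b = a + (b - a)" "1 \<le> int b - int a" by auto
    then show ?thesis by (simp add: Tt_Zs ser_var_eq)
  next
    case False
    then show ?thesis by (simp add: Tt_Zs)
  qed
  finally show "t_flow a b m = Rep_fser (Tt Zs (int b - int a)) m" .
qed

lemma s_flow_eq: "s_flow = (\<lambda>a b. Rep_fser (Ts Zs (int a - int b)))"
proof (intro ext)
  fix a b m
  have "s_flow a b m = - (\<Sum>\<^sub>\<infinity>i\<in>{1..}. if a = b + i then ser_var (Inr i) m else 0)"
    unfolding s_flow_def ser_neg_def ser_sum_def shiftT_pow
    by (simp add: ser_mult_if_one)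
  also have "(\<Sum>\<^sub>\<infinity>i\<in>{1..}. if a = b + i then ser_var (Inr i) m else 0) =
    (if a - b \<in> {1..} then (if a = b + (a - b) then ser_var (Inr (a - b)) m else 0) else 0)"
  proof (rule infsum_single_supp)
    fix y assume "y \<noteq> a - b"
    then have "a \<noteq> b + y" by auto
    then show "(if a = b + y then ser_var (Inr y) m else 0) = 0" by simp
  qed
  also have "- \<dots> = Rep_fser (Ts Zs (int a - int b)) m"
  proof (cases "b < a")
    case True
    then have "nat (int a - int b) = a - b" "a - b \<in> {1..}" "a = b + (a - b)" "1 \<le> int a - int b" by auto
    then show ?thesis by (simp add: Ts_Zs ser_var_eq)
  next
    case False
    then show ?thesis by (simp add: Ts_Zs)
  qed
  finally show "s_flow a b m = Rep_fser (Ts Zs (int a - int b)) m" .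
qed

lemma exp_t: "smat_exp t_flow a b = Rep_fser (Tt gen_series (int b - int a))"
  by (simp add: t_flow_eq smat_exp_Tt gen_series_Zs)

lemma exp_s: "smat_exp s_flow a b = Rep_fser (Ts gen_series (int a - int b))"
  by (simp add: s_flow_eq smat_exp_Ts gen_series_Zs)

lemma Tt_gen: "Tt gen_series d = Abs_fser (ser_subst t_vars (schur_p d))"
  by (simp add: Tt_def renh_def t_vars_eq schur_p_cz Abs_fser_inverse)

lemma Ts_gen: "Ts gen_series d = Abs_fser (ser_subst neg_s_vars (schur_p d))"
  by (simp add: Ts_def renh_def neg_s_vars_eq schur_p_cz Abs_fser_inverse)

definition Inc :: "nat \<Rightarrow> nat \<Rightarrow> nat list set" where
  "Inc n N = {ks. length ks = n \<and> sorted_wrt (<) ks \<and> set ks \<subseteq> {..<N}}"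

lemma finite_Inc: "finite (Inc n N)"
proof -
  have "Inc n N \<subseteq> {xs. set xs \<subseteq> {..<N} \<and> length xs = n}" by (auto simp: Inc_def)
  then show ?thesis by (rule finite_subset) (rule finite_lists_length_eq, simp)
qed

definition cb_map :: "nat \<Rightarrow> nat list \<times> (nat \<Rightarrow> nat) \<Rightarrow> nat \<Rightarrow> nat" where
  "cb_map n x = (\<lambda>i. if i < n then fst x ! (snd x i) else i)"

definition cb_inv :: "nat \<Rightarrow> (nat \<Rightarrow> nat) \<Rightarrow> nat list \<times> (nat \<Rightarrow> nat)" where
  "cb_inv n f = (let ks = sorted_list_of_set (f ` {0..<n}) in
     (ks, \<lambda>x. if x < n then inv_into {..<n} ((!) ks) (f x) else x))"

lemma cb_bij:
  "bij_betw (cb_map n) (Inc n N \<times> {p. p permutes {0..<n}})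
     {f. ((\<forall>i\<in>{0..<n}. f i \<in> {0..<N}) \<and> (\<forall>i. i \<notin> {0..<n} \<longrightarrow> f i = i)) \<and> inj_on f {0..<n}}"
proof (rule bij_betw_byWitness[where f' = "cb_inv n"])
  show "\<forall>a\<in>Inc n N \<times> {p. p permutes {0..<n}}. cb_inv n (cb_map n a) = a"
  proof
    fix a assume a: "a \<in> Inc n N \<times> {p. p permutes {0..<n}}"
    obtain ks p where kp: "a = (ks, p)" by (cases a)
    have ks: "length ks = n" "sorted_wrt (<) ks" "set ks \<subseteq> {..<N}" and p: "p permutes {0..<n}"
      using a kp by (auto simp: Inc_def)
    have dist: "distinct ks" and srt: "sorted ks" using ks(2) by (auto simp: strict_sorted_iff)
    have img: "cb_map n (ks, p) ` {0..<n} = set ks"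
    proof -
      have "cb_map n (ks, p) ` {0..<n} = (\<lambda>i. ks ! i) ` (p ` {0..<n})"
        by (auto simp: cb_map_def image_image)
      also have "p ` {0..<n} = {0..<n}" using p by (rule permutes_image)
      also have "(\<lambda>i. ks ! i) ` {0..<n} = set ks" using ks(1) by (auto simp: set_conv_nth)
      finally show ?thesis .
    qed
    have sl: "sorted_list_of_set (set ks) = ks"
      using srt dist by (rule sorted_list_of_set.idem_if_sorted_distinct)
    have bij: "bij_betw ((!) ks) {..<n} (set ks)"
      using dist ks(1) by (intro bij_betw_nth) auto
    have "(\<lambda>x. if x < n then inv_into {..<n} ((!) ks) (cb_map n (ks, p) x) else x) = p"
    proof
      fix x show "(if x < n then inv_into {..<n} ((!) ks) (cb_map n (ks, p) x) else x) = p x"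
      proof (cases "x < n")
        case True
        then have px: "p x < n" using permutes_in_image[OF p] by auto
        have "inv_into {..<n} ((!) ks) (ks ! p x) = p x"
          using bij px by (intro inv_into_f_f) (auto simp: bij_betw_def)
        then show ?thesis using True by (simp add: cb_map_def)
      next
        case False
        then show ?thesis using p by (simp add: permutes_def)
      qed
    qed
    then show "cb_inv n (cb_map n a) = a"
      unfolding kp by (simp add: cb_inv_def img sl Let_def)
  qed
next
  show "\<forall>f\<in>{f. ((\<forall>i\<in>{0..<n}. f i \<in> {0..<N}) \<and> (\<forall>i. i \<notin> {0..<n} \<longrightarrow> f i = i)) \<and> inj_on f {0..<n}}.
      cb_map n (cb_inv n f) = f"
  proof
    fix f assume f: "f \<in> {f. ((\<forall>i\<in>{0..<n}. f i \<in> {0..<N}) \<and> (\<forall>i. i \<notin> {0..<n} \<longrightarrow> f i = i)) \<and> inj_on f {0..<n}}"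
    let ?ks = "sorted_list_of_set (f ` {0..<n})"
    have len: "length ?ks = n" using f by (simp add: card_image)
    have dist: "distinct ?ks" by simp
    have set: "set ?ks = f ` {0..<n}" by simp
    have bij: "bij_betw ((!) ?ks) {..<n} (f ` {0..<n})"
      using dist len set by (intro bij_betw_nth) auto
    show "cb_map n (cb_inv n f) = f"
    proof
      fix x show "cb_map n (cb_inv n f) x = f x"
      proof (cases "x < n")
        case True
        then have "f x \<in> f ` {0..<n}" by auto
        then have "?ks ! inv_into {..<n} ((!) ?ks) (f x) = f x"
          using bij by (metis bij_betw_inv_into_right)
        then show ?thesis using True by (simp add: cb_map_def cb_inv_def Let_def)
      next
        case False
        then show ?thesis using f by (simp add: cb_map_def cb_inv_def Let_def)
      qed
    qed
  qed
next
  show "cb_map n ` (Inc n N \<times> {p. p permutes {0..<n}}) \<subseteq>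
      {f. ((\<forall>i\<in>{0..<n}. f i \<in> {0..<N}) \<and> (\<forall>i. i \<notin> {0..<n} \<longrightarrow> f i = i)) \<and> inj_on f {0..<n}}"
  proof clarify
    fix ks p assume ks: "ks \<in> Inc n N" and p: "p permutes {0..<n}"
    have k: "length ks = n" "sorted_wrt (<) ks" "set ks \<subseteq> {..<N}" using ks by (auto simp: Inc_def)
    have dist: "distinct ks" using k(2) by (auto simp: strict_sorted_iff)
    have pin: "\<And>i. i < n \<Longrightarrow> p i < n" using permutes_in_image[OF p] by auto
    have "\<forall>i\<in>{0..<n}. cb_map n (ks, p) i \<in> {0..<N}"
      using k pin by (auto simp: cb_map_def) (meson lessThan_iff nth_mem subsetD)
    moreover have "\<forall>i. i \<notin> {0..<n} \<longrightarrow> cb_map n (ks, p) i = i" by (simp add: cb_map_def)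
    moreover have "inj_on (cb_map n (ks, p)) {0..<n}"
    proof (rule inj_onI)
      fix x y assume x: "x \<in> {0..<n}" and y: "y \<in> {0..<n}" and e: "cb_map n (ks, p) x = cb_map n (ks, p) y"
      then have "ks ! p x = ks ! p y" by (simp add: cb_map_def)
      then have "p x = p y" using nth_eq_iff_index_eq[OF dist] pin x y k(1) by auto
      then show "x = y" using permutes_inj[OF p] by (simp add: inj_def)
    qed
    ultimately show "((\<forall>i\<in>{0..<n}. cb_map n (ks, p) i \<in> {0..<N}) \<and> (\<forall>i. i \<notin> {0..<n} \<longrightarrow> cb_map n (ks, p) i = i)) \<and>
        inj_on (cb_map n (ks, p)) {0..<n}" by blast
  qed
next
  show "cb_inv n ` {f. ((\<forall>i\<in>{0..<n}. f i \<in> {0..<N}) \<and> (\<forall>i. i \<notin> {0..<n} \<longrightarrow> f i = i)) \<and> inj_on f {0..<n}}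
      \<subseteq> Inc n N \<times> {p. p permutes {0..<n}}"
  proof (rule image_subsetI)
    fix f assume "f \<in> {f. ((\<forall>i\<in>{0..<n}. f i \<in> {0..<N}) \<and> (\<forall>i. i \<notin> {0..<n} \<longrightarrow> f i = i)) \<and> inj_on f {0..<n}}"
    then have f: "\<forall>i\<in>{0..<n}. f i \<in> {0..<N}" "\<forall>i. i \<notin> {0..<n} \<longrightarrow> f i = i" "inj_on f {0..<n}" by auto
    let ?ks = "sorted_list_of_set (f ` {0..<n})"
    have len: "length ?ks = n" using f by (simp add: card_image)
    have dist: "distinct ?ks" by simp
    have bij: "bij_betw ((!) ?ks) {..<n} (f ` {0..<n})"
      using dist len by (intro bij_betw_nth) auto
    have "?ks \<in> Inc n N" using f len by (auto simp: Inc_def strict_sorted_list_of_set)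
    moreover have "(\<lambda>x. if x < n then inv_into {..<n} ((!) ?ks) (f x) else x) permutes {0..<n}"
    proof (rule inj_on_nat_permutes)
      have bi: "bij_betw (inv_into {..<n} ((!) ?ks)) (f ` {0..<n}) {..<n}"
        using bij by (rule bij_betw_inv_into)
      show "inj_on (\<lambda>x. if x < n then inv_into {..<n} ((!) ?ks) (f x) else x) {0..<n}"
      proof (rule inj_onI)
        fix x y assume x: "x \<in> {0..<n}" and y: "y \<in> {0..<n}"
          and e: "(if x < n then inv_into {..<n} ((!) ?ks) (f x) else x) = (if y < n then inv_into {..<n} ((!) ?ks) (f y) else y)"
        then have "inv_into {..<n} ((!) ?ks) (f x) = inv_into {..<n} ((!) ?ks) (f y)" by simp
        then have "f x = f y" using bi x y by (auto simp: bij_betw_def inj_on_def)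
        then show "x = y" using f(3) x y by (auto simp: inj_on_def)
      qed
      show "(\<lambda>x. if x < n then inv_into {..<n} ((!) ?ks) (f x) else x) \<in> {0..<n} \<rightarrow> {0..<n}"
        using bi by (auto simp: bij_betw_def)
    qed auto
    ultimately show "cb_inv n f \<in> Inc n N \<times> {p. p permutes {0..<n}}"
      by (simp add: cb_inv_def Let_def)
  qed
qed

theorem cauchy_binet:
  fixes A B :: "'a :: comm_ring_1 mat"
  assumes A: "A \<in> carrier_mat n N" and B: "B \<in> carrier_mat N n"
  shows "det (A * B) = (\<Sum>ks\<in>Inc n N. det (mat n n (\<lambda>(i, j). A $$ (i, ks ! j))) * det (mat n n (\<lambda>(i, j). B $$ (ks ! i, j))))"
proof -
  let ?U = "{0..<n}"
  let ?F = "{f. (\<forall>i\<in>?U. f i \<in> {0..<N}) \<and> (\<forall>i. i \<notin> ?U \<longrightarrow> f i = i)}"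
  let ?Fi = "{f. ((\<forall>i\<in>?U. f i \<in> {0..<N}) \<and> (\<forall>i. i \<notin> ?U \<longrightarrow> f i = i)) \<and> inj_on f ?U}"
  let ?X = "\<lambda>f. (\<Prod>i\<in>?U. A $$ (i, f i)) * det (mat\<^sub>r n n (\<lambda>i. row B (f i)))"
  have finF: "finite ?F" by (rule finite_bounded_functions) auto
  have rowB: "\<And>k. row B k \<in> carrier_vec n" using B by auto
  have "det (A * B) = (\<Sum>f\<in>?F. det (mat\<^sub>r n n (\<lambda>i. A $$ (i, f i) \<cdot>\<^sub>v row B (f i))))"
    unfolding mat_mul_finsum_alt[OF A B]
    by (rule det_linear_rows_sum) (use rowB in auto)
  also have "\<dots> = (\<Sum>f\<in>?F. ?X f)"
    by (rule sum.cong[OF refl], rule det_rows_mul) (use rowB in auto)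
  also have "\<dots> = (\<Sum>f\<in>?Fi. ?X f)"
  proof (rule sum.mono_neutral_right[OF finF])
    show "?Fi \<subseteq> ?F" by auto
    show "\<forall>f\<in>?F - ?Fi. ?X f = 0"
    proof
      fix f assume f: "f \<in> ?F - ?Fi"
      then obtain i j where ij: "i \<in> ?U" "j \<in> ?U" "i \<noteq> j" "f i = f j" by (auto simp: inj_on_def)
      have "det (mat\<^sub>r n n (\<lambda>i. row B (f i))) = 0"
        by (rule det_identical_rows[OF _ ij(3)]) (use ij rowB in auto)
      then show "?X f = 0" by simp
    qed
  qed
  also have "\<dots> = (\<Sum>x\<in>Inc n N \<times> {p. p permutes ?U}. ?X (cb_map n x))"
    by (rule sum.reindex_bij_betw[OF cb_bij, symmetric])
  also have "\<dots> = (\<Sum>ks\<in>Inc n N. \<Sum>p\<in>{p. p permutes ?U}. ?X (cb_map n (ks, p)))"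
    using sum.cartesian_product[where g = "\<lambda>ks p. ?X (cb_map n (ks, p))" and A = "Inc n N" and B = "{p. p permutes ?U}"]
    by (simp add: case_prod_beta')
  also have "\<dots> = (\<Sum>ks\<in>Inc n N. det (mat n n (\<lambda>(i, j). A $$ (i, ks ! j))) * det (mat n n (\<lambda>(i, j). B $$ (ks ! i, j))))"
  proof (rule sum.cong[OF refl])
    fix ks assume ks: "ks \<in> Inc n N"
    have len: "length ks = n" using ks by (simp add: Inc_def)
    let ?Bk = "mat n n (\<lambda>(i, j). B $$ (ks ! i, j))"
    let ?Ak = "mat n n (\<lambda>(i, j). A $$ (i, ks ! j))"
    have Bk: "?Bk \<in> carrier_mat n n" by simp
    have "?X (cb_map n (ks, p)) = (\<Prod>i\<in>?U. A $$ (i, ks ! p i)) * (of_int (sign p) * det ?Bk)"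
      if p: "p permutes ?U" for p
    proof -
      have pin: "\<And>i. i < n \<Longrightarrow> p i < n" using permutes_in_image[OF p] by auto
      have "mat\<^sub>r n n (\<lambda>i. row B (cb_map n (ks, p) i)) = mat n n (\<lambda>(i, j). ?Bk $$ (p i, j))"
        by (rule eq_matI) (use pin len B in \<open>auto simp: cb_map_def Matrix.row_def\<close>)
      then have "det (mat\<^sub>r n n (\<lambda>i. row B (cb_map n (ks, p) i))) = of_int (sign p) * det ?Bk"
        using det_permute_rows[OF Bk p] by simp
      moreover have "(\<Prod>i\<in>?U. A $$ (i, cb_map n (ks, p) i)) = (\<Prod>i\<in>?U. A $$ (i, ks ! p i))"
        by (rule prod.cong) (auto simp: cb_map_def)
      ultimately show ?thesis by simp
    qed
    note Xp = this
    have "(\<Sum>p\<in>{p. p permutes ?U}. ?X (cb_map n (ks, p))) =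
      (\<Sum>p\<in>{p. p permutes ?U}. of_int (sign p) * (\<Prod>i\<in>?U. A $$ (i, ks ! p i)) * det ?Bk)"
    proof (rule sum.cong[OF refl])
      fix p assume "p \<in> {p. p permutes ?U}"
      then show "?X (cb_map n (ks, p)) = of_int (sign p) * (\<Prod>i\<in>?U. A $$ (i, ks ! p i)) * det ?Bk"
        using Xp[of p] by (simp only: mem_Collect_eq ac_simps)
    qed
    also have "\<dots> = (\<Sum>p\<in>{p. p permutes ?U}. of_int (sign p) * (\<Prod>i\<in>?U. A $$ (i, ks ! p i))) * det ?Bk"
      by (simp add: sum_distrib_right)
    also have "(\<Sum>p\<in>{p. p permutes ?U}. of_int (sign p) * (\<Prod>i\<in>?U. A $$ (i, ks ! p i))) = det ?Ak"
    proof -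
      have "det ?Ak = (\<Sum>p\<in>{p. p permutes ?U}. of_int (sign p) * (\<Prod>i\<in>?U. ?Ak $$ (i, p i)))"
        by (rule det_def') simp
      also have "\<dots> = (\<Sum>p\<in>{p. p permutes ?U}. of_int (sign p) * (\<Prod>i\<in>?U. A $$ (i, ks ! p i)))"
      proof (rule sum.cong[OF refl])
        fix p assume "p \<in> {p. p permutes ?U}"
        then have pin: "\<And>i. i < n \<Longrightarrow> p i < n" using permutes_in_image by fastforce
        show "of_int (sign p) * (\<Prod>i\<in>?U. ?Ak $$ (i, p i)) = of_int (sign p) * (\<Prod>i\<in>?U. A $$ (i, ks ! p i))"
          by (rule arg_cong[where f = "\<lambda>x. _ * x"], rule prod.cong) (use pin in auto)
      qed
      finally show ?thesis by simp
    qed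
    finally show "(\<Sum>p\<in>{p. p permutes ?U}. ?X (cb_map n (ks, p))) = det ?Ak * det ?Bk" .
  qed
  finally show ?thesis .
qed

definition revp :: "nat \<Rightarrow> nat \<Rightarrow> nat" where
  "revp n i = (if i < n then n - 1 - i else i)"

lemma revp_permutes: "revp n permutes {0..<n}"
proof (rule inj_on_nat_permutes)
  show "inj_on (revp n) {0..<n}" by (rule inj_onI) (auto simp: revp_def)
  show "revp n \<in> {0..<n} \<rightarrow> {0..<n}" by (auto simp: revp_def)
qed (auto simp: revp_def)

lemma det_rev2:
  fixes f :: "nat \<Rightarrow> nat \<Rightarrow> 'a :: comm_ring_1"
  shows "det (mat n n (\<lambda>(i, j). f (n - 1 - i) (n - 1 - j))) = det (mat n n (\<lambda>(i, j). f i j))"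
proof -
  let ?p = "revp n"
  have p: "?p permutes {0..<n}" by (rule revp_permutes)
  let ?M = "mat n n (\<lambda>(i, j). f i j)"
  let ?M1 = "mat n n (\<lambda>(i, j). f (n - 1 - i) j)"
  have M1: "?M1 = mat n n (\<lambda>(i, j). ?M $$ (?p i, j))"
    by (rule eq_matI) (auto simp: revp_def)
  have d1: "det ?M1 = of_int (sign ?p) * det ?M"
    unfolding M1 by (rule det_permute_rows[OF _ p]) simp
  have M2: "mat n n (\<lambda>(i, j). f (n - 1 - i) (n - 1 - j)) = (mat n n (\<lambda>(i, j). ?M1\<^sup>T $$ (?p i, j)))\<^sup>T"
    by (rule eq_matI) (auto simp: revp_def)
  have "det (mat n n (\<lambda>(i, j). f (n - 1 - i) (n - 1 - j))) = det (mat n n (\<lambda>(i, j). ?M1\<^sup>T $$ (?p i, j)))"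
    unfolding M2 by (rule det_transpose[of _ n]) simp
  also have "\<dots> = of_int (sign ?p) * det ?M1\<^sup>T"
    by (rule det_permute_rows[OF _ p]) simp
  also have "det ?M1\<^sup>T = det ?M1" by (rule det_transpose[of _ n]) simp
  also have "det ?M1 = of_int (sign ?p) * det ?M" by (rule d1)
  also have "of_int (sign ?p) * (of_int (sign ?p) * det ?M) = det ?M"
  proof -
    have sq: "x \<in> {1, -1} \<Longrightarrow> x * x = (1::'a)" for x by auto
    have "(of_int (sign ?p) :: 'a) * of_int (sign ?p) = 1"
      by (rule sq) (rule signof_pm_one)
    then show ?thesis by (simp add: mult.assoc[symmetric])
  qed
  finally show ?thesis .
qed

section \<open>Young diagrams versus increasing sequences\<close>

definition kap :: "nat \<Rightarrow> nat list \<Rightarrow> nat list" where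
  "kap n lam = map (\<lambda>j. lam ! (n - 1 - j) + j) [0..<n]"

definition unkap :: "nat \<Rightarrow> nat list \<Rightarrow> nat list" where
  "unkap n ks = map (\<lambda>i. ks ! (n - 1 - i) - (n - 1 - i)) [0..<n]"

definition YN :: "nat \<Rightarrow> nat \<Rightarrow> nat list set" where
  "YN n N = {lam \<in> young n. lam ! 0 + n \<le> N}"

lemma strict_nth_ge:
  assumes "sorted_wrt (<) ks" "a \<le> b" "b < length ks"
  shows "ks ! a + (b - a) \<le> ks ! b"
  using assms(2,3)
proof (induction b)
  case 0 then show ?case by simp
next
  case (Suc b)
  show ?case
  proof (cases "a = Suc b")
    case True then show ?thesis by simp
  next
    case False
    then have "a \<le> b" using Suc by simp
    then have "ks ! a + (b - a) \<le> ks ! b" using Suc by simp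
    moreover have "ks ! b < ks ! Suc b" using assms(1) Suc(3) by (simp add: sorted_wrt_iff_nth_less)
    ultimately show ?thesis using \<open>a \<le> b\<close> by linarith
  qed
qed

lemma young_nth_mono: "lam \<in> young n \<Longrightarrow> i \<le> j \<Longrightarrow> j < n \<Longrightarrow> lam ! j \<le> lam ! i"
  by (cases "i = j") (auto simp: young_def sorted_wrt_iff_nth_less)

lemma kap_bij:
  assumes n: "n > 0"
  shows "bij_betw (kap n) (YN n N) (Inc n N)"
proof (rule bij_betw_byWitness[where f' = "unkap n"])
  show "\<forall>lam\<in>YN n N. unkap n (kap n lam) = lam"
    by (auto simp: YN_def young_def kap_def unkap_def intro!: nth_equalityI)
  show "\<forall>ks\<in>Inc n N. kap n (unkap n ks) = ks"
  proof
    fix ks assume ks: "ks \<in> Inc n N"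
    then have k: "length ks = n" "sorted_wrt (<) ks" by (auto simp: Inc_def)
    have "j \<le> ks ! j" if "j < n" for j using strict_nth_ge[OF k(2), of 0 j] that k(1) by simp
    then show "kap n (unkap n ks) = ks"
      using k by (auto simp: kap_def unkap_def intro!: nth_equalityI)
  qed
  show "kap n ` YN n N \<subseteq> Inc n N"
  proof
    fix ks assume "ks \<in> kap n ` YN n N"
    then obtain lam where lam: "lam \<in> YN n N" "ks = kap n lam" by auto
    have y: "lam \<in> young n" "lam ! 0 + n \<le> N" using lam by (auto simp: YN_def)
    have "sorted_wrt (<) ks"
      unfolding sorted_wrt_iff_nth_less
    proof (intro allI impI)
      fix i j assume ij: "i < j" "j < length ks"
      then have "lam ! (n - 1 - i) \<le> lam ! (n - 1 - j)"
        using young_nth_mono[OF y(1), of "n - 1 - j" "n - 1 - i"] lam(2) by (simp add: kap_def)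
      then show "ks ! i < ks ! j" using ij lam(2) by (simp add: kap_def)
    qed
    moreover have "set ks \<subseteq> {..<N}"
    proof
      fix x assume "x \<in> set ks"
      then obtain j where j: "j < n" "x = lam ! (n - 1 - j) + j" using lam(2) by (auto simp: kap_def)
      have "lam ! (n - 1 - j) \<le> lam ! 0" using young_nth_mono[OF y(1), of 0 "n - 1 - j"] j n by simp
      then show "x \<in> {..<N}" using j y(2) by simp
    qed
    ultimately show "ks \<in> Inc n N" using lam(2) by (simp add: Inc_def kap_def)
  qed
  show "unkap n ` Inc n N \<subseteq> YN n N"
  proof
    fix lam assume "lam \<in> unkap n ` Inc n N"
    then obtain ks where ks: "ks \<in> Inc n N" "lam = unkap n ks" by auto
    then have k: "length ks = n" "sorted_wrt (<) ks" "set ks \<subseteq> {..<N}" by (auto simp: Inc_def)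
    have "sorted_wrt (\<lambda>x y. y \<le> x) lam"
      unfolding sorted_wrt_iff_nth_less
    proof (intro allI impI)
      fix i j assume ij: "i < j" "j < length lam"
      then have "j < n" using ks(2) by (simp add: unkap_def)
      have "ks ! (n - 1 - j) + ((n - 1 - i) - (n - 1 - j)) \<le> ks ! (n - 1 - i)"
        using strict_nth_ge[OF k(2), of "n - 1 - j" "n - 1 - i"] ij \<open>j < n\<close> k(1) by simp
      then show "lam ! j \<le> lam ! i" using ij \<open>j < n\<close> ks(2) by (simp add: unkap_def)
    qed
    moreover have "lam ! 0 + n \<le> N"
    proof -
      have "n - 1 < length ks" using k(1) n by simp
      then have "ks ! (n - 1) \<in> set ks" by (rule nth_mem)
      then have "ks ! (n - 1) < N" using k(3) by auto
      moreover have "n - 1 \<le> ks ! (n - 1)" using strict_nth_ge[OF k(2), of 0 "n - 1"] k(1) n by simp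
      ultimately show ?thesis using ks(2) n by (simp add: unkap_def)
    qed
    ultimately show "lam \<in> YN n N" using ks(2) by (simp add: YN_def young_def unkap_def)
  qed
qed

lemma finite_YN: "n > 0 \<Longrightarrow> finite (YN n N)"
  using bij_betw_finite[OF kap_bij] finite_Inc by blast

definition vidx :: "nat + nat \<Rightarrow> nat" where "vidx v = (case v of Inl i \<Rightarrow> i | Inr i \<Rightarrow> i)"

abbreviation W :: "(nat + nat) mon \<Rightarrow> nat" where "W \<equiv> wt vidx"

definition wlb :: "nat \<Rightarrow> (nat + nat) fser \<Rightarrow> bool" where
  "wlb d x \<longleftrightarrow> (\<forall>a. Rep_fser x a \<noteq> 0 \<longrightarrow> d \<le> W a)"

lemma wlb_zero: "wlb d 0"
  by (simp add: wlb_def)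

lemma wlb_mono: "wlb d x \<Longrightarrow> e \<le> d \<Longrightarrow> wlb e x"
  by (force simp: wlb_def)

lemma ser_mult_nz:
  assumes "ser_mult F G b \<noteq> 0"
  shows "\<exists>p q. p + q = b \<and> F p \<noteq> 0 \<and> G q \<noteq> 0"
proof (rule ccontr)
  assume "\<not> ?thesis"
  then have "\<forall>x\<in>{(p, q). p + q = b}. (case x of (p, q) \<Rightarrow> F p * G q) = 0" by auto
  then have "ser_mult F G b = 0" unfolding ser_mult_def by (rule sum.neutral)
  then show False using assms by simp
qed

lemma wlb_mult_left: "wlb d x \<Longrightarrow> wlb d (x * y)"
  unfolding wlb_def
proof (intro allI impI)
  fix a assume w: "\<forall>a. Rep_fser x a \<noteq> 0 \<longrightarrow> d \<le> W a" and nz: "Rep_fser (x * y) a \<noteq> 0"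
  then obtain p q where pq: "p + q = a" "Rep_fser x p \<noteq> 0"
    unfolding Rep_mult using ser_mult_nz by blast
  then have "d \<le> W p" using w by auto
  also have "W p \<le> W a" using pq(1) wt_add[of vidx p q] by simp
  finally show "d \<le> W a" .
qed

lemma wlb_mult_right: "wlb d y \<Longrightarrow> wlb d (x * y)"
  using wlb_mult_left[of d y x] by (simp add: mult.commute)

lemma wlb_add: "wlb d x \<Longrightarrow> wlb d y \<Longrightarrow> wlb d (x + y)"
  unfolding wlb_def
proof (intro allI impI)
  fix a assume x: "\<forall>a. Rep_fser x a \<noteq> 0 \<longrightarrow> d \<le> W a" and y: "\<forall>a. Rep_fser y a \<noteq> 0 \<longrightarrow> d \<le> W a"
    and nz: "Rep_fser (x + y) a \<noteq> 0"
  show "d \<le> W a"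
  proof (cases "Rep_fser x a = 0")
    case True then have "Rep_fser y a \<noteq> 0" using nz by simp
    then show ?thesis using y by blast
  next
    case False then show ?thesis using x by blast
  qed
qed

lemma wlb_sum: "(\<And>i. i \<in> A \<Longrightarrow> wlb d (f i)) \<Longrightarrow> wlb d (sum f A)"
  by (induction A rule: infinite_finite_induct) (auto simp: wlb_zero wlb_add)

lemma wlb_prod: "finite A \<Longrightarrow> i \<in> A \<Longrightarrow> wlb d (f i) \<Longrightarrow> wlb d (prod f A)"
  by (simp add: prod.remove wlb_mult_left)

lemma wlb_vanish: "wlb d x \<Longrightarrow> W a < d \<Longrightarrow> Rep_fser x a = 0"
  by (force simp: wlb_def)

lemma wlb_det_row0:
  assumes n: "0 < n" and r: "\<And>j. j < n \<Longrightarrow> wlb d (f 0 j)"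
  shows "wlb d (det (mat n n (\<lambda>(i, j). f i j)))"
proof -
  have "det (mat n n (\<lambda>(i, j). f i j)) = (\<Sum>p\<in>{p. p permutes {0..<n}}. of_int (sign p) * (\<Prod>i\<in>{0..<n}. mat n n (\<lambda>(i, j). f i j) $$ (i, p i)))"
    by (rule det_def') simp
  also have "wlb d \<dots>"
  proof (rule wlb_sum, rule wlb_mult_right)
    fix p assume "p \<in> {p. p permutes {0..<n}}"
    then have p0: "p 0 < n" using permutes_in_image n by fastforce
    show "wlb d (\<Prod>i\<in>{0..<n}. mat n n (\<lambda>(i, j). f i j) $$ (i, p i))"
      by (rule wlb_prod[where i = 0]) (use n p0 r in auto)
  qed
  finally show ?thesis .
qed

definition bal :: "nat ser \<Rightarrow> bool" where
  "bal F \<longleftrightarrow> (\<forall>b. F b \<noteq> 0 \<longrightarrow> lk b 0 = wt (\<lambda>x. x) b)"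

lemma bal_mult: "bal F \<Longrightarrow> bal G \<Longrightarrow> bal (ser_mult F G)"
  unfolding bal_def
proof (intro allI impI)
  fix b assume F: "\<forall>b. F b \<noteq> 0 \<longrightarrow> lk b 0 = wt (\<lambda>x. x) b" and G: "\<forall>b. G b \<noteq> 0 \<longrightarrow> lk b 0 = wt (\<lambda>x. x) b"
    and nz: "ser_mult F G b \<noteq> 0"
  then obtain p q where pq: "p + q = b" "F p \<noteq> 0" "G q \<noteq> 0"
    using ser_mult_nz by blast
  then show "lk b 0 = wt (\<lambda>x. x) b"
    using F G by (auto simp: lookup_add wt_add[symmetric])
qed

lemma bal_one: "bal ser_one"
  by (simp add: bal_def ser_one_def ser_const_def)

lemma bal_pow: "bal F \<Longrightarrow> bal (ser_pow F k)"
  by (induction k) (simp_all add: ser_pow_def bal_one bal_mult)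

lemma bal_scale: "bal F \<Longrightarrow> bal (ser_scale c F)"
  by (simp add: bal_def ser_scale_def)

lemma bal_ser_sum: "(\<And>i. i \<in> I \<Longrightarrow> bal (F i)) \<Longrightarrow> bal (ser_sum F I)"
  unfolding bal_def ser_sum_def
proof (intro allI impI)
  fix b assume F: "\<And>i. i \<in> I \<Longrightarrow> \<forall>b. F i b \<noteq> 0 \<longrightarrow> lk b 0 = wt (\<lambda>x. x) b"
    and nz: "(\<Sum>\<^sub>\<infinity>i\<in>I. F i b) \<noteq> 0"
  show "lk b 0 = wt (\<lambda>x. x) b"
  proof (rule ccontr)
    assume "lk b 0 \<noteq> wt (\<lambda>x. x) b"
    then have "\<And>i. i \<in> I \<Longrightarrow> F i b = 0" using F by blast
    then have "(\<Sum>\<^sub>\<infinity>i\<in>I. F i b) = 0" by (simp add: infsum_0)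
    then show False using nz by simp
  qed
qed

lemma bal_gen: "bal gen_series"
proof -
  have "bal (ser_mult (ser_var i) (ser_pow (ser_var 0) i))" if "i \<in> {1..}" for i
  proof -
    have "lk (sng i 1 + sng 0 i) 0 = wt (\<lambda>x. x) (sng i 1 + sng 0 i)"
      using that by (simp add: lookup_add lk_sng wt_add wt_single)
    then show ?thesis by (simp add: Zs_term bal_def Rep_mnm)
  qed
  then have "bal Zs" unfolding Zs_def by (rule bal_ser_sum)
  then show ?thesis unfolding gen_series_Zs ser_exp_def
    by (intro bal_ser_sum bal_scale bal_pow)
qed

lemma wlb_renh_gen:
  assumes inj: "inj f" and fv: "\<And>x. vidx (f x) = x"
  shows "wlb (nat d) (renh f e (Abs_fser (cz d gen_series)))"
  unfolding wlb_def Rep_renh_cz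
proof (intro allI impI)
  fix a
  assume nz: "(if inrange f a \<and> 0 \<le> d \<and> lk (Poly_Mapping.map_key f a) 0 = 0
     then e ^ dg (Poly_Mapping.map_key f a) * gen_series (Poly_Mapping.map_key f a + sng 0 (nat d)) else 0) \<noteq> 0"
  let ?c = "Poly_Mapping.map_key f a"
  have c: "inrange f a" "lk ?c 0 = 0" "gen_series (?c + sng 0 (nat d)) \<noteq> 0" using nz by (auto split: if_splits)
  then have "lk (?c + sng 0 (nat d)) 0 = wt (\<lambda>x. x) (?c + sng 0 (nat d))"
    using bal_gen by (simp add: bal_def)
  then have "nat d = wt (\<lambda>x. x) ?c" using c(2) by (simp add: lookup_add lk_sng wt_add wt_single)
  also have "\<dots> = W a"
  proof -
    have "W a = W (push f ?c)" using push_map_key[OF inj c(1)] by simp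
    also have "\<dots> = wt (vidx \<circ> f) ?c" by (rule wt_push[OF inj])
    also have "vidx \<circ> f = (\<lambda>x. x)" by (simp add: fun_eq_iff fv)
    finally show ?thesis by simp
  qed
  finally show "nat d \<le> W a" by simp
qed

lemma wlb_T: "wlb (nat d) (Tt gen_series d)"
  unfolding Tt_def by (rule wlb_renh_gen) (simp_all add: vidx_def)

lemma wlb_S: "wlb (nat d) (Ts gen_series d)"
  unfolding Ts_def by (rule wlb_renh_gen) (simp_all add: vidx_def)

section \<open>Congruence modulo monomials not below m\<close>

definition cg :: "(nat + nat) mon \<Rightarrow> (nat + nat) fser \<Rightarrow> (nat + nat) fser \<Rightarrow> bool" where
  "cg m x y \<longleftrightarrow> (\<forall>a. (\<forall>v. lk a v \<le> lk m v) \<longrightarrow> Rep_fser x a = Rep_fser y a)"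

lemma cg_refl: "cg m x x" by (simp add: cg_def)
lemma cg_sym: "cg m x y \<Longrightarrow> cg m y x" by (simp add: cg_def)
lemma cg_trans: "cg m x y \<Longrightarrow> cg m y z \<Longrightarrow> cg m x z" by (simp add: cg_def)
lemma cg_at: "cg m x y \<Longrightarrow> Rep_fser x m = Rep_fser y m" by (simp add: cg_def)

lemma cg_add: "cg m x x' \<Longrightarrow> cg m y y' \<Longrightarrow> cg m (x + y) (x' + y')"
  by (simp add: cg_def)

lemma cg_mult: "cg m x x' \<Longrightarrow> cg m y y' \<Longrightarrow> cg m (x * y) (x' * y')"
  unfolding cg_def
proof (intro allI impI)
  fix a assume x: "\<forall>a. (\<forall>v. lk a v \<le> lk m v) \<longrightarrow> Rep_fser x a = Rep_fser x' a"
    and y: "\<forall>a. (\<forall>v. lk a v \<le> lk m v) \<longrightarrow> Rep_fser y a = Rep_fser y' a"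
    and a: "\<forall>v. lk a v \<le> lk m v"
  show "Rep_fser (x * y) a = Rep_fser (x' * y') a"
    unfolding Rep_mult ser_mult_def
  proof (rule sum.cong[OF refl])
    fix pq assume "pq \<in> {(p, q). p + q = a}"
    then obtain p q where pq: "pq = (p, q)" "p + q = a" by auto
    have "\<forall>v. lk p v \<le> lk m v" "\<forall>v. lk q v \<le> lk m v"
      using a pq(2) by (auto simp: lookup_add intro: le_trans[rotated])
    then show "(case pq of (p, q) \<Rightarrow> Rep_fser x p * Rep_fser y q) = (case pq of (p, q) \<Rightarrow> Rep_fser x' p * Rep_fser y' q)"
      using x y pq by simp
  qed
qed

lemma cg_sum: "(\<And>i. i \<in> A \<Longrightarrow> cg m (f i) (g i)) \<Longrightarrow> cg m (sum f A) (sum g A)"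
  by (induction A rule: infinite_finite_induct) (auto simp: cg_refl cg_add)

lemma cg_prod: "(\<And>i. i \<in> A \<Longrightarrow> cg m (f i) (g i)) \<Longrightarrow> cg m (prod f A) (prod g A)"
  by (induction A rule: infinite_finite_induct) (auto simp: cg_refl cg_mult)

lemma cg_det:
  assumes "A \<in> carrier_mat n n" "B \<in> carrier_mat n n" "\<And>i j. i < n \<Longrightarrow> j < n \<Longrightarrow> cg m (A $$ (i, j)) (B $$ (i, j))"
  shows "cg m (det A) (det B)"
  unfolding det_def'[OF assms(1)] det_def'[OF assms(2)]
proof (rule cg_sum, rule cg_mult[OF cg_refl], rule cg_prod)
  fix p i assume "p \<in> {p. p permutes {0..<n}}" "i \<in> {0..<n}"
  then show "cg m (A $$ (i, p i)) (B $$ (i, p i))"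
    using assms(3) permutes_in_image by fastforce
qed

lemma wlb_cg: "wlb d x \<Longrightarrow> W m < d \<Longrightarrow> cg m x 0"
  unfolding cg_def
proof (intro allI impI)
  fix a assume w: "wlb d x" "W m < d" and a: "\<forall>v. lk a v \<le> lk m v"
  have "W a \<le> W m" using a by (intro wt_mono_le) auto
  then show "Rep_fser x a = Rep_fser 0 a" using wlb_vanish[OF w(1)] w(2) by simp
qed

lemma cg_ser_sum:
  assumes "finite K" "\<And>k. k \<notin> K \<Longrightarrow> cg m (F k) 0" "\<And>k. k \<in> K \<Longrightarrow> cg m (F k) (G k)"
  shows "cg m (Abs_fser (ser_sum (\<lambda>k. Rep_fser (F k)) UNIV)) (\<Sum>k\<in>K. G k)"
  unfolding cg_def
proof (intro allI impI)
  fix a assume a: "\<forall>v. lk a v \<le> lk m v"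
  have "Rep_fser (Abs_fser (ser_sum (\<lambda>k. Rep_fser (F k)) UNIV)) a = (\<Sum>\<^sub>\<infinity>k\<in>UNIV. Rep_fser (F k) a)"
    by (simp add: Abs_fser_inverse ser_sum_def)
  also have "\<dots> = (\<Sum>k\<in>K. Rep_fser (F k) a)"
    by (subst infsum_supp[where S = K]) (use assms a in \<open>auto simp: cg_def\<close>)
  also have "\<dots> = (\<Sum>k\<in>K. Rep_fser (G k) a)"
    by (rule sum.cong) (use assms a in \<open>auto simp: cg_def\<close>)
  finally show "Rep_fser (Abs_fser (ser_sum (\<lambda>k. Rep_fser (F k)) UNIV)) a = Rep_fser (\<Sum>k\<in>K. G k) a"
    by simp
qed

abbreviation TT :: "int \<Rightarrow> (nat + nat) fser" where "TT d \<equiv> Tt gen_series d"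
abbreviation SS :: "int \<Rightarrow> (nat + nat) fser" where "SS d \<equiv> Ts gen_series d"

lemma map_mat_mat: "map_mat f (mat n m g) = mat n m (\<lambda>ij. f (g ij))"
  by (rule eq_matI) auto

definition sT :: "nat \<Rightarrow> nat list \<Rightarrow> (nat + nat) fser" where
  "sT n lam = det (mat n n (\<lambda>(i, j). TT (int (lam ! i) - int i + int j)))"
definition sS :: "nat \<Rightarrow> nat list \<Rightarrow> (nat + nat) fser" where
  "sS n nu = det (mat n n (\<lambda>(i, j). SS (int (nu ! i) - int i + int j)))"

lemma sT_eq:
  assumes l: "length lam = n"
  shows "Abs_fser (ser_subst t_vars (schur lam)) = sT n lam"
proof -
  let ?M = "mat n n (\<lambda>(i, j). Abs_fser (schur_p (int (lam ! i) - int i + int j)))"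
  have "Abs_fser (ser_subst t_vars (schur lam)) = renh Inl 1 (det ?M)"
    by (simp add: t_vars_eq schur_def ser_det_eq l renh_def)
  also have "\<dots> = det (map_mat (renh Inl 1) ?M)"
    by (rule rt.hom_det[symmetric])
  also have "map_mat (renh Inl 1) ?M = mat n n (\<lambda>(i, j). TT (int (lam ! i) - int i + int j))"
    by (rule eq_matI) (auto simp: Tt_def schur_p_cz)
  finally show ?thesis by (simp add: sT_def)
qed

lemma sS_eq:
  assumes l: "length nu = n"
  shows "Abs_fser (ser_subst neg_s_vars (schur nu)) = sS n nu"
proof -
  let ?M = "mat n n (\<lambda>(i, j). Abs_fser (schur_p (int (nu ! i) - int i + int j)))"
  have "Abs_fser (ser_subst neg_s_vars (schur nu)) = renh Inr (-1) (det ?M)"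
    by (simp add: neg_s_vars_eq schur_def ser_det_eq l renh_def)
  also have "\<dots> = det (map_mat (renh Inr (-1)) ?M)"
    by (rule rs.hom_det[symmetric])
  also have "map_mat (renh Inr (-1)) ?M = mat n n (\<lambda>(i, j). SS (int (nu ! i) - int i + int j))"
    by (rule eq_matI) (auto simp: Ts_def schur_p_cz)
  finally show ?thesis by (simp add: sS_def)
qed

lemma wlb_sT: "0 < n \<Longrightarrow> wlb (lam ! 0) (sT n lam)"
  unfolding sT_def
proof (rule wlb_det_row0)
  fix j assume "j < n"
  show "wlb (lam ! 0) (TT (int (lam ! 0) - int 0 + int j))"
    by (rule wlb_mono[OF wlb_T]) simp
qed

lemma wlb_sS: "0 < n \<Longrightarrow> wlb (nu ! 0) (sS n nu)"
  unfolding sS_def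
proof (rule wlb_det_row0)
  fix j assume "j < n"
  show "wlb (nu ! 0) (SS (int (nu ! 0) - int 0 + int j))"
    by (rule wlb_mono[OF wlb_S]) simp
qed

lemma det_A_kap:
  assumes lam: "lam \<in> young n"
  shows "det (mat n n (\<lambda>(i, j). TT (int (kap n lam ! j) - int i))) = sT n lam"
proof -
  let ?f = "\<lambda>i j. TT (int (lam ! i) - int i + int j)"
  have "mat n n (\<lambda>(i, j). TT (int (kap n lam ! j) - int i)) = (mat n n (\<lambda>(i, j). ?f (n - 1 - i) (n - 1 - j)))\<^sup>T"
  proof (rule eq_matI)
    fix i j assume ij: "i < dim_row (mat n n (\<lambda>(i, j). ?f (n - 1 - i) (n - 1 - j)))\<^sup>T"
      "j < dim_col (mat n n (\<lambda>(i, j). ?f (n - 1 - i) (n - 1 - j)))\<^sup>T"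
    then have "i < n" "j < n" by auto
    then have "int (lam ! (n - 1 - j) + j) - int i = int (lam ! (n - 1 - j)) - int (n - 1 - j) + int (n - 1 - i)"
      by linarith
    then show "mat n n (\<lambda>(i, j). TT (int (kap n lam ! j) - int i)) $$ (i, j) =
      (mat n n (\<lambda>(i, j). ?f (n - 1 - i) (n - 1 - j)))\<^sup>T $$ (i, j)"
      using \<open>i < n\<close> \<open>j < n\<close> by (simp add: kap_def add_diff_eq)
  qed auto
  then have "det (mat n n (\<lambda>(i, j). TT (int (kap n lam ! j) - int i))) = det (mat n n (\<lambda>(i, j). ?f (n - 1 - i) (n - 1 - j)))"
    using det_transpose[of "mat n n (\<lambda>(i, j). ?f (n - 1 - i) (n - 1 - j))" n] by simp
  also have "\<dots> = det (mat n n (\<lambda>(i, j). ?f i j))" by (rule det_rev2)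
  finally show ?thesis by (simp add: sT_def)
qed

lemma det_B_kap:
  assumes nu: "nu \<in> young n"
  shows "det (mat n n (\<lambda>(i, j). SS (int (kap n nu ! i) - int j))) = sS n nu"
proof -
  let ?g = "\<lambda>i j. SS (int (nu ! i) - int i + int j)"
  have "mat n n (\<lambda>(i, j). SS (int (kap n nu ! i) - int j)) = mat n n (\<lambda>(i, j). ?g (n - 1 - i) (n - 1 - j))"
  proof (rule eq_matI)
    fix i j assume "i < dim_row (mat n n (\<lambda>(i, j). ?g (n - 1 - i) (n - 1 - j)))"
      "j < dim_col (mat n n (\<lambda>(i, j). ?g (n - 1 - i) (n - 1 - j)))"
    then have ij: "i < n" "j < n" by auto
    then have "int (nu ! (n - 1 - i) + i) - int j = int (nu ! (n - 1 - i)) - int (n - 1 - i) + int (n - 1 - j)"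
      by linarith
    then show "mat n n (\<lambda>(i, j). SS (int (kap n nu ! i) - int j)) $$ (i, j) =
      mat n n (\<lambda>(i, j). ?g (n - 1 - i) (n - 1 - j)) $$ (i, j)"
      using ij by (simp add: kap_def add_diff_eq)
  qed auto
  also have "det \<dots> = det (mat n n (\<lambda>(i, j). ?g i j))" by (rule det_rev2)
  finally show ?thesis by (simp add: sS_def)
qed

lemma det_M_kap:
  fixes \<mu> :: "nat \<Rightarrow> nat \<Rightarrow> complex"
  assumes lam: "lam \<in> young n" and nu: "nu \<in> young n"
  shows "(det (mat n n (\<lambda>(i, j). cst (\<mu> (kap n lam ! i) (kap n nu ! j)))) :: (nat + nat) fser) =
    cst (det (mat n n (\<lambda>(i, j). \<mu> (lam ! i + n - Suc i) (nu ! j + n - Suc j))))"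
proof -
  let ?h = "\<lambda>i j. \<mu> (kap n lam ! i) (kap n nu ! j)"
  have "(mat n n (\<lambda>(i, j). cst (\<mu> (kap n lam ! i) (kap n nu ! j))) :: (nat + nat) fser mat) = map_mat cst (mat n n (\<lambda>(i, j). ?h i j))"
    by (rule eq_matI) auto
  then have "(det (mat n n (\<lambda>(i, j). cst (\<mu> (kap n lam ! i) (kap n nu ! j)))) :: (nat + nat) fser) = cst (det (mat n n (\<lambda>(i, j). ?h i j)))"
    by (simp add: cst.hom_det)
  also have "det (mat n n (\<lambda>(i, j). ?h i j)) = det (mat n n (\<lambda>(i, j). ?h (n - 1 - i) (n - 1 - j)))"
    by (rule det_rev2[symmetric])
  also have "mat n n (\<lambda>(i, j). ?h (n - 1 - i) (n - 1 - j)) = mat n n (\<lambda>(i, j). \<mu> (lam ! i + n - Suc i) (nu ! j + n - Suc j))"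
    by (rule eq_matI) (auto simp: kap_def)
  finally show ?thesis .
qed

lemma mat_mult_entry:
  assumes "A \<in> carrier_mat n k" "B \<in> carrier_mat k p" "i < n" "j < p"
  shows "(A * B) $$ (i, j) = (\<Sum>l\<in>{0..<k}. A $$ (i, l) * B $$ (l, j))"
  using assms by (simp add: scalar_prod_def)

lemma Inc_nth: "ks \<in> Inc n N \<Longrightarrow> i < n \<Longrightarrow> ks ! i < N"
  unfolding Inc_def using nth_mem by fastforce

theorem mainTheorem11:
  fixes \<mu> :: "nat \<Rightarrow> nat \<Rightarrow> complex" and n :: nat
  assumes "n > 0"
  shows "tau \<mu> n =
    ser_sum (\<lambda>(lam, nu).
        ser_scale (det (mat n n (\<lambda>(i, j). \<mu> (lam ! i + n - Suc i) (nu ! j + n - Suc j))))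
          (ser_mult (ser_subst t_vars (schur lam)) (ser_subst neg_s_vars (schur nu))))
      (young n \<times> young n)"
proof (rule ext)
  fix m :: "(nat + nat) mon"
  have n: "0 < n" by (rule assms)
  define N where "N = n + W m + 1"
  define AN :: "(nat + nat) fser mat" where "AN = mat n N (\<lambda>(r, k). TT (int k - int r))"
  define MN :: "(nat + nat) fser mat" where "MN = mat N N (\<lambda>(k, l). cst (\<mu> k l))"
  define BN :: "(nat + nat) fser mat" where "BN = mat N n (\<lambda>(l, c). SS (int l - int c))"
  have AN: "AN \<in> carrier_mat n N" and MN: "MN \<in> carrier_mat N N" and BN: "BN \<in> carrier_mat N n"
    by (simp_all add: AN_def MN_def BN_def)
  have AMN: "AN * MN \<in> carrier_mat n N" using AN MN by simp
  have AMBN: "AN * MN * BN \<in> carrier_mat n n" using AMN BN by simp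

  (* Step 1: the entries of m_inf, truncated *)
  have entry: "cg m (Abs_fser (m_inf \<mu> i j)) ((AN * MN * BN) $$ (i, j))" if ij: "i < n" "j < n" for i j
  proof -
    define Xf where "Xf l = Abs_fser (smat_mult (smat_exp t_flow) (\<lambda>i j. ser_const (\<mu> i j)) i l)" for l
    have X: "cg m (Xf l) ((AN * MN) $$ (i, l))" if l: "l < N" for l
    proof -
      have e1: "Xf l = Abs_fser (ser_sum (\<lambda>k. Rep_fser (TT (int k - int i) * cst (\<mu> k l))) UNIV)"
        by (simp add: Xf_def smat_mult_def exp_t Rep_mult Rep_cst)
      have e2: "cg m (Abs_fser (ser_sum (\<lambda>k. Rep_fser (TT (int k - int i) * cst (\<mu> k l))) UNIV))
          (\<Sum>k\<in>{0..<N}. AN $$ (i, k) * MN $$ (k, l))"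
      proof (rule cg_ser_sum)
        fix k assume "k \<notin> {0..<N}"
        then have "W m < nat (int k - int i)" using ij unfolding N_def by auto
        then show "cg m (TT (int k - int i) * cst (\<mu> k l)) 0"
          by (intro wlb_cg[OF wlb_mult_left[OF wlb_T]])
      next
        fix k assume "k \<in> {0..<N}"
        then show "cg m (TT (int k - int i) * cst (\<mu> k l)) (AN $$ (i, k) * MN $$ (k, l))"
          using ij l by (simp add: AN_def MN_def cg_refl)
      qed simp
      have e3: "(\<Sum>k\<in>{0..<N}. AN $$ (i, k) * MN $$ (k, l)) = (AN * MN) $$ (i, l)"
        using mat_mult_entry[OF AN MN ij(1) l] by simp
      show ?thesis using e2 unfolding e1 e3 .
    qed
    have e1: "Abs_fser (m_inf \<mu> i j) = Abs_fser (ser_sum (\<lambda>l. Rep_fser (Xf l * SS (int l - int j))) UNIV)"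
      by (simp add: m_inf_def smat_mult_def[of "smat_mult _ _"] Xf_def exp_s Rep_mult Abs_fser_inverse)
    have e2: "cg m (Abs_fser (ser_sum (\<lambda>l. Rep_fser (Xf l * SS (int l - int j))) UNIV))
        (\<Sum>l\<in>{0..<N}. (AN * MN) $$ (i, l) * BN $$ (l, j))"
    proof (rule cg_ser_sum)
      fix l assume "l \<notin> {0..<N}"
      then have "W m < nat (int l - int j)" using ij unfolding N_def by auto
      then show "cg m (Xf l * SS (int l - int j)) 0"
        by (intro wlb_cg[OF wlb_mult_right[OF wlb_S]])
    next
      fix l assume "l \<in> {0..<N}"
      then show "cg m (Xf l * SS (int l - int j)) ((AN * MN) $$ (i, l) * BN $$ (l, j))"
        using ij X[of l] by (intro cg_mult) (auto simp: BN_def cg_refl)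
    qed simp
    have e3: "(\<Sum>l\<in>{0..<N}. (AN * MN) $$ (i, l) * BN $$ (l, j)) = (AN * MN * BN) $$ (i, j)"
      using mat_mult_entry[OF AMN BN ij] by simp
    show ?thesis using e2 unfolding e1 e3 .
  qed

  have tau_m: "tau \<mu> n m = Rep_fser (det (AN * MN * BN)) m"
  proof -
    have "tau \<mu> n = Rep_fser (det (mat n n (\<lambda>(i, j). Abs_fser (m_inf \<mu> i j))))"
      by (simp add: tau_def ser_det_eq)
    moreover have "cg m (det (mat n n (\<lambda>(i, j). Abs_fser (m_inf \<mu> i j)))) (det (AN * MN * BN))"
      by (rule cg_det[OF _ AMBN]) (use entry in auto)
    ultimately show ?thesis by (simp add: cg_at)
  qed

  (* Step 3: Cauchy-Binet twice *)
  have cb: "det (AN * MN * BN) = (\<Sum>ks\<in>Inc n N. \<Sum>rs\<in>Inc n N.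
      det (mat n n (\<lambda>(i, j). AN $$ (i, ks ! j))) *
      (det (mat n n (\<lambda>(i, j). MN $$ (ks ! i, rs ! j))) * det (mat n n (\<lambda>(i, j). BN $$ (rs ! i, j)))))"
  proof -
    have MBN: "MN * BN \<in> carrier_mat N n" using MN BN by simp
    have "det (AN * MN * BN) = det (AN * (MN * BN))" using assoc_mult_mat[OF AN MN BN] by simp
    also have "\<dots> = (\<Sum>ks\<in>Inc n N. det (mat n n (\<lambda>(i, j). AN $$ (i, ks ! j))) * det (mat n n (\<lambda>(i, j). (MN * BN) $$ (ks ! i, j))))"
      by (rule cauchy_binet[OF AN MBN])
    also have "\<dots> = (\<Sum>ks\<in>Inc n N. \<Sum>rs\<in>Inc n N.
      det (mat n n (\<lambda>(i, j). AN $$ (i, ks ! j))) *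
      (det (mat n n (\<lambda>(i, j). MN $$ (ks ! i, rs ! j))) * det (mat n n (\<lambda>(i, j). BN $$ (rs ! i, j)))))"
    proof (rule sum.cong[OF refl])
      fix ks assume ks: "ks \<in> Inc n N"
      then have kl: "\<And>i. i < n \<Longrightarrow> ks ! i < N" by (rule Inc_nth)
      let ?Mk = "mat n N (\<lambda>(i, l). MN $$ (ks ! i, l))"
      have Mk: "?Mk \<in> carrier_mat n N" by simp
      have "mat n n (\<lambda>(i, j). (MN * BN) $$ (ks ! i, j)) = ?Mk * BN"
      proof (rule eq_matI)
        fix i j assume "i < dim_row (?Mk * BN)" "j < dim_col (?Mk * BN)"
        then have ij: "i < n" "j < n" using BN by auto
        show "mat n n (\<lambda>(i, j). (MN * BN) $$ (ks ! i, j)) $$ (i, j) = (?Mk * BN) $$ (i, j)"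
          using ij kl[OF ij(1)] mat_mult_entry[OF MN BN kl[OF ij(1)] ij(2)] mat_mult_entry[OF Mk BN ij]
          by simp
      qed (use BN in auto)
      then have "det (mat n n (\<lambda>(i, j). (MN * BN) $$ (ks ! i, j))) =
        (\<Sum>rs\<in>Inc n N. det (mat n n (\<lambda>(i, j). ?Mk $$ (i, rs ! j))) * det (mat n n (\<lambda>(i, j). BN $$ (rs ! i, j))))"
        using cauchy_binet[OF Mk BN] by simp
      also have "\<dots> = (\<Sum>rs\<in>Inc n N. det (mat n n (\<lambda>(i, j). MN $$ (ks ! i, rs ! j))) * det (mat n n (\<lambda>(i, j). BN $$ (rs ! i, j))))"
      proof (rule sum.cong[OF refl])
        fix rs assume "rs \<in> Inc n N"
        then have rl: "\<And>i. i < n \<Longrightarrow> rs ! i < N" by (rule Inc_nth)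
        have "mat n n (\<lambda>(i, j). ?Mk $$ (i, rs ! j)) = mat n n (\<lambda>(i, j). MN $$ (ks ! i, rs ! j))"
          by (rule eq_matI) (auto simp: rl)
        then show "det (mat n n (\<lambda>(i, j). ?Mk $$ (i, rs ! j))) * det (mat n n (\<lambda>(i, j). BN $$ (rs ! i, j))) =
          det (mat n n (\<lambda>(i, j). MN $$ (ks ! i, rs ! j))) * det (mat n n (\<lambda>(i, j). BN $$ (rs ! i, j)))"
          by simp
      qed
      finally show "det (mat n n (\<lambda>(i, j). AN $$ (i, ks ! j))) * det (mat n n (\<lambda>(i, j). (MN * BN) $$ (ks ! i, j))) =
        (\<Sum>rs\<in>Inc n N. det (mat n n (\<lambda>(i, j). AN $$ (i, ks ! j))) *
          (det (mat n n (\<lambda>(i, j). MN $$ (ks ! i, rs ! j))) * det (mat n n (\<lambda>(i, j). BN $$ (rs ! i, j)))))"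
        by (simp add: sum_distrib_left)
    qed
    finally show ?thesis .
  qed

  let ?c = "\<lambda>lam nu. det (mat n n (\<lambda>(i, j). \<mu> (lam ! i + n - Suc i) (nu ! j + n - Suc j)))"
  let ?G = "\<lambda>(lam, nu). ser_scale (?c lam nu)
          (ser_mult (ser_subst t_vars (schur lam)) (ser_subst neg_s_vars (schur nu)))"
  have G_eq: "?G (lam, nu) = Rep_fser (cst (?c lam nu) * (sT n lam * sS n nu))"
    if "lam \<in> young n" "nu \<in> young n" for lam nu
  proof -
    have "length lam = n" "length nu = n" using that by (auto simp: young_def)
    then have "ser_subst t_vars (schur lam) = Rep_fser (sT n lam)" "ser_subst neg_s_vars (schur nu) = Rep_fser (sS n nu)"
      using sT_eq sS_eq by (metis Abs_fser_inverse UNIV_I)+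
    then show ?thesis by (simp add: ser_scale_eq Rep_mult[symmetric] Rep_fser_inverse)
  qed
  have rhs: "ser_sum ?G (young n \<times> young n) m =
      (\<Sum>lam\<in>YN n N. \<Sum>nu\<in>YN n N. Rep_fser (cst (?c lam nu) * (sT n lam * sS n nu)) m)"
  proof -
    have "ser_sum ?G (young n \<times> young n) m = (\<Sum>\<^sub>\<infinity>x\<in>young n \<times> young n. ?G x m)"
      by (simp add: ser_sum_def)
    also have "\<dots> = (\<Sum>x\<in>(young n \<times> young n) \<inter> (YN n N \<times> YN n N). ?G x m)"
    proof (rule infsum_supp)
      show "finite (YN n N \<times> YN n N)" using finite_YN[OF n] by simp
    next
      fix x assume x: "x \<in> young n \<times> young n" "x \<notin> YN n N \<times> YN n N"
      obtain lam nu where x': "x = (lam, nu)" "lam \<in> young n" "nu \<in> young n" using x(1) by auto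
      have "W m < lam ! 0 \<or> W m < nu ! 0" using x x' by (auto simp: YN_def N_def)
      then have "wlb (Suc (W m)) (sT n lam * sS n nu)"
      proof
        assume "W m < lam ! 0"
        then have "wlb (Suc (W m)) (sT n lam)" using wlb_sT[OF n, of lam] by (rule_tac wlb_mono) auto
        then show ?thesis by (rule wlb_mult_left)
      next
        assume "W m < nu ! 0"
        then have "wlb (Suc (W m)) (sS n nu)" using wlb_sS[OF n, of nu] by (rule_tac wlb_mono) auto
        then show ?thesis by (rule wlb_mult_right)
      qed
      then have "wlb (Suc (W m)) (cst (?c lam nu) * (sT n lam * sS n nu))"
        by (rule wlb_mult_right)
      then have "Rep_fser (cst (?c lam nu) * (sT n lam * sS n nu)) m = 0"
        by (rule wlb_vanish) simp
      then show "?G x m = 0" using G_eq[OF x'(2,3)] x'(1) by simp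
    qed
    also have "(young n \<times> young n) \<inter> (YN n N \<times> YN n N) = YN n N \<times> YN n N"
      by (auto simp: YN_def)
    also have "(\<Sum>x\<in>YN n N \<times> YN n N. ?G x m) = (\<Sum>x\<in>YN n N \<times> YN n N. Rep_fser (cst (?c (fst x) (snd x)) * (sT n (fst x) * sS n (snd x))) m)"
    proof (rule sum.cong[OF refl])
      fix x assume "x \<in> YN n N \<times> YN n N"
      then obtain lam nu where x: "x = (lam, nu)" "lam \<in> young n" "nu \<in> young n" by (auto simp: YN_def)
      have "?G (lam, nu) = Rep_fser (cst (?c lam nu) * (sT n lam * sS n nu))" by (rule G_eq[OF x(2,3)])
      then show "?G x m = Rep_fser (cst (?c (fst x) (snd x)) * (sT n (fst x) * sS n (snd x))) m"
        unfolding x(1) fst_conv snd_conv by (rule fun_cong)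
    qed
    also have "\<dots> = (\<Sum>lam\<in>YN n N. \<Sum>nu\<in>YN n N. Rep_fser (cst (?c lam nu) * (sT n lam * sS n nu)) m)"
      by (simp add: sum.cartesian_product case_prod_beta)
    finally show ?thesis .
  qed

  have "Rep_fser (det (AN * MN * BN)) m = (\<Sum>ks\<in>Inc n N. \<Sum>rs\<in>Inc n N.
      Rep_fser (det (mat n n (\<lambda>(i, j). AN $$ (i, ks ! j))) *
      (det (mat n n (\<lambda>(i, j). MN $$ (ks ! i, rs ! j))) * det (mat n n (\<lambda>(i, j). BN $$ (rs ! i, j))))) m)"
    unfolding cb by simp
  also have "\<dots> = (\<Sum>lam\<in>YN n N. \<Sum>nu\<in>YN n N.
      Rep_fser (det (mat n n (\<lambda>(i, j). AN $$ (i, kap n lam ! j))) *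
      (det (mat n n (\<lambda>(i, j). MN $$ (kap n lam ! i, kap n nu ! j))) * det (mat n n (\<lambda>(i, j). BN $$ (kap n nu ! i, j))))) m)"
  proof -
    define H where "H ks rs = Rep_fser (det (mat n n (\<lambda>(i, j). AN $$ (i, ks ! j))) *
      (det (mat n n (\<lambda>(i, j). MN $$ (ks ! i, rs ! j))) * det (mat n n (\<lambda>(i, j). BN $$ (rs ! i, j))))) m" for ks rs
    have b: "bij_betw (kap n) (YN n N) (Inc n N)" by (rule kap_bij[OF n])
    have "(\<Sum>ks\<in>Inc n N. \<Sum>rs\<in>Inc n N. H ks rs) = (\<Sum>lam\<in>YN n N. \<Sum>rs\<in>Inc n N. H (kap n lam) rs)"
      using sum.reindex_bij_betw[OF b, of "\<lambda>ks. \<Sum>rs\<in>Inc n N. H ks rs"] by simp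
    also have "\<dots> = (\<Sum>lam\<in>YN n N. \<Sum>nu\<in>YN n N. H (kap n lam) (kap n nu))"
    proof (rule sum.cong[OF refl])
      fix lam
      show "(\<Sum>rs\<in>Inc n N. H (kap n lam) rs) = (\<Sum>nu\<in>YN n N. H (kap n lam) (kap n nu))"
        using sum.reindex_bij_betw[OF b, of "\<lambda>rs. H (kap n lam) rs"] by simp
    qed
    finally show ?thesis unfolding H_def .
  qed
  also have "\<dots> = (\<Sum>lam\<in>YN n N. \<Sum>nu\<in>YN n N. Rep_fser (cst (?c lam nu) * (sT n lam * sS n nu)) m)"
  proof (intro sum.cong refl)
    fix lam nu assume lam: "lam \<in> YN n N" and nu: "nu \<in> YN n N"
    have ly: "lam \<in> young n" and ny: "nu \<in> young n" using lam nu by (auto simp: YN_def)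
    have ki: "kap n lam \<in> Inc n N" "kap n nu \<in> Inc n N"
      using kap_bij[OF n] lam nu by (auto simp: bij_betw_def)
    then have kl: "\<And>i. i < n \<Longrightarrow> kap n lam ! i < N" "\<And>i. i < n \<Longrightarrow> kap n nu ! i < N"
      by (auto intro: Inc_nth)
    have dA: "det (mat n n (\<lambda>(i, j). AN $$ (i, kap n lam ! j))) = sT n lam"
    proof -
      have "mat n n (\<lambda>(i, j). AN $$ (i, kap n lam ! j)) = mat n n (\<lambda>(i, j). TT (int (kap n lam ! j) - int i))"
        by (rule eq_matI) (auto simp: AN_def kl)
      then show ?thesis using det_A_kap[OF ly] by simp
    qed
    have dB: "det (mat n n (\<lambda>(i, j). BN $$ (kap n nu ! i, j))) = sS n nu"
    proof -
      have "mat n n (\<lambda>(i, j). BN $$ (kap n nu ! i, j)) = mat n n (\<lambda>(i, j). SS (int (kap n nu ! i) - int j))"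
        by (rule eq_matI) (auto simp: BN_def kl)
      then show ?thesis using det_B_kap[OF ny] by simp
    qed
    have dM: "det (mat n n (\<lambda>(i, j). MN $$ (kap n lam ! i, kap n nu ! j))) = cst (?c lam nu)"
    proof -
      have "mat n n (\<lambda>(i, j). MN $$ (kap n lam ! i, kap n nu ! j)) = mat n n (\<lambda>(i, j). cst (\<mu> (kap n lam ! i) (kap n nu ! j)))"
        by (rule eq_matI) (auto simp: MN_def kl)
      then show ?thesis using det_M_kap[OF ly ny, of \<mu>] by simp
    qed
    show "Rep_fser (det (mat n n (\<lambda>(i, j). AN $$ (i, kap n lam ! j))) *
      (det (mat n n (\<lambda>(i, j). MN $$ (kap n lam ! i, kap n nu ! j))) * det (mat n n (\<lambda>(i, j). BN $$ (kap n nu ! i, j))))) m =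
      Rep_fser (cst (?c lam nu) * (sT n lam * sS n nu)) m"
      unfolding dA dB dM by (simp add: ac_simps)
  qed
  finally show "tau \<mu> n m = ser_sum ?G (young n \<times> young n) m"
    unfolding tau_m rhs .
qed

end
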